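(* Let $m,n$ be coprime positive integers and $G_{m,n}=\langle x,y\mid x^m=y^n\rangle$. Define $\Psi:X(G_{m,n})\to\mathbb{C}^3$ by $\Psi(\chi_\rho)=(\mathrm{tr}\,A,\mathrm{tr}\,B,\mathrm{tr}\,AB)$, where $\rho=(A,B)$, $A=\rho(x)$, $B=\rho(y)$. Then $\Psi$ is an isomorphism onto its image $C=\Psi(X(G_{m,n}))$. The curve $C$ has exactly $\frac{(m-1)(n-1)}{2}+1$ irreducible components, each smooth and isomorphic to $\mathbb{C}$: one component is the image of the locus $X_{red}$ of reducible characters, and the other $\frac{(m-1)(n-1)}{2}$ components are the images of the lines $X^{k,k'}_{irr}$ ($0<k<m$, $0<k'<n$, $k\equiv k'\pmod 2$) making up the closure $X_{irr}$ of the irreducible characters. These latter components are pairwise disjoint, each meets the reducible component in exactly two points, all these $(m-1)(n-1)$ intersection points are distinct, and at each of them the two components meet transversally, forming a nodal (normal crossing) singularity; $C$ has no other singularities.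
   Context: $G_{m,n}$ is the fundamental group of the complement of the $(m,n)$ torus knot. Representations $\rho:G_{m,n}\to\mathrm{SL}(2,\mathbb{C})$ are pairs $(A,B)\in\mathrm{SL}(2,\mathbb{C})^2$ with $A^m=B^n$; $X(G_{m,n})$ is the set of characters $\chi_\rho(g)=\mathrm{tr}\,\rho(g)$ with its Culler–Shalen algebraic structure. A representation is reducible if $A,B$ share an eigenvector, irreducible otherwise. $X_{red}$ is the set of reducible characters; it consists of the characters of $(\mathrm{diag}(t^n,t^{-n}),\mathrm{diag}(t^m,t^{-m}))$, $t\in\mathbb{C}^*$. $X_{irr}$ is the closure of the set of irreducible characters; it consists of the characters of the pairs $A=\mathrm{diag}(\lambda,\lambda^{-1})$, $B=P\,\mathrm{diag}(\mu,\mu^{-1})P^{-1}$ with $P=\begin{pmatrix}1&r-1\\1&r\end{pmatrix}$, $r\in\mathbb{C}$, where $\lambda=e^{\pi ik/m}$, $\mu=e^{\pi ik'/n}$, $0<k<m$, $0<k'<n$, $k\equiv k'\pmod 2$; for fixed $(k,k')$ these form the line $X^{k,k'}_{irr}$. *)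

theory Defs
  imports "HOL-Analysis.Analysis" "HOL-Computational_Algebra.Polynomial"
begin

type_synonym mat2 = "complex^2^2"
type_synonym pt3 = "complex \<times> complex \<times> complex"

text \<open>Matrix powers (the vector type is not a monoid under matrix product).\<close>
primrec mpow :: "mat2 \<Rightarrow> nat \<Rightarrow> mat2" where
  "mpow A 0 = mat 1"
| "mpow A (Suc k) = A ** mpow A k"

datatype letter = Lx | Ly | Lxi | Lyi

fun letter_mat :: "mat2 \<Rightarrow> mat2 \<Rightarrow> letter \<Rightarrow> mat2" where
  "letter_mat A B Lx = A"
| "letter_mat A B Ly = B"
| "letter_mat A B Lxi = matrix_inv A"
| "letter_mat A B Lyi = matrix_inv B"

primrec word_mat :: "mat2 \<Rightarrow> mat2 \<Rightarrow> letter list \<Rightarrow> mat2" where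
  "word_mat A B [] = mat 1"
| "word_mat A B (l # w) = letter_mat A B l ** word_mat A B w"

definition reps :: "nat \<Rightarrow> nat \<Rightarrow> (mat2 \<times> mat2) set" where
  "reps m n = {(A, B). det A = 1 \<and> det B = 1 \<and> mpow A m = mpow B n}"

text \<open>Character of the representation (A,B), as a function on words
  (it factors through G_{m,n}).\<close>
definition chi :: "mat2 \<Rightarrow> mat2 \<Rightarrow> letter list \<Rightarrow> complex" where
  "chi A B = (\<lambda>w. trace (word_mat A B w))"

definition charvar :: "nat \<Rightarrow> nat \<Rightarrow> (letter list \<Rightarrow> complex) set" where
  "charvar m n = (\<lambda>(A, B). chi A B) ` reps m n"

definition Psi :: "(letter list \<Rightarrow> complex) \<Rightarrow> pt3" where
  "Psi ch = (ch [Lx], ch [Ly], ch [Lx, Ly])"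

definition diagm :: "complex \<Rightarrow> mat2" where
  "diagm l = (\<chi> i j. if i = j then (if i = 1 then l else inverse l) else 0)"

definition Pmat :: "complex \<Rightarrow> mat2" where
  "Pmat r = (\<chi> i j. if j = 1 then 1 else (if i = 1 then r - 1 else r))"

definition Xred :: "nat \<Rightarrow> nat \<Rightarrow> (letter list \<Rightarrow> complex) set" where
  "Xred m n = {chi (diagm (t ^ n)) (diagm (t ^ m)) | t. t \<noteq> 0}"

definition Xirr_line :: "nat \<Rightarrow> nat \<Rightarrow> nat \<Rightarrow> nat \<Rightarrow> (letter list \<Rightarrow> complex) set" where
  "Xirr_line m n k k' =
     {chi (diagm (exp (pi * \<i> * of_nat k / of_nat m)))
          (Pmat r ** diagm (exp (pi * \<i> * of_nat k' / of_nat n)) ** matrix_inv (Pmat r)) | r. True}"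

definition irr_index :: "nat \<Rightarrow> nat \<Rightarrow> (nat \<times> nat) set" where
  "irr_index m n = {(k, k'). 0 < k \<and> k < m \<and> 0 < k' \<and> k' < n \<and> k mod 2 = k' mod 2}"

definition poly3_fun :: "(pt3 \<Rightarrow> complex) \<Rightarrow> bool" where
  "poly3_fun f \<longleftrightarrow> (\<exists>N c. \<forall>x y z. f (x, y, z) =
      (\<Sum>i\<le>N. \<Sum>j\<le>N. \<Sum>k\<le>N. c i j k * x ^ i * y ^ j * z ^ k))"

definition zclosed :: "pt3 set \<Rightarrow> bool" where
  "zclosed S \<longleftrightarrow> (\<exists>F. (\<forall>f\<in>F. poly3_fun f) \<and> S = {p. \<forall>f\<in>F. f p = 0})"

definition zirred :: "pt3 set \<Rightarrow> bool" where
  "zirred S \<longleftrightarrow> zclosed S \<and> S \<noteq> {} \<and>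
     (\<forall>A B. zclosed A \<longrightarrow> zclosed B \<longrightarrow> S \<subseteq> A \<union> B \<longrightarrow> S \<subseteq> A \<or> S \<subseteq> B)"

definition zcomponents :: "pt3 set \<Rightarrow> pt3 set set" where
  "zcomponents S = {T. T \<subseteq> S \<and> zirred T \<and>
      (\<forall>T'. T \<subseteq> T' \<longrightarrow> T' \<subseteq> S \<longrightarrow> zirred T' \<longrightarrow> T' = T)}"

type_synonym pcurve = "complex poly \<times> complex poly \<times> complex poly"

definition pc_eval :: "pcurve \<Rightarrow> complex \<Rightarrow> pt3" where
  "pc_eval \<phi> t = (case \<phi> of (p1, p2, p3) \<Rightarrow> (poly p1 t, poly p2 t, poly p3 t))"

definition pc_deriv :: "pcurve \<Rightarrow> complex \<Rightarrow> pt3" where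
  "pc_deriv \<phi> t = (case \<phi> of (p1, p2, p3) \<Rightarrow>
      (poly (pderiv p1) t, poly (pderiv p2) t, poly (pderiv p3) t))"

definition iso_to_line :: "pcurve \<Rightarrow> pt3 set \<Rightarrow> bool" where
  "iso_to_line \<phi> S \<longleftrightarrow> bij_betw (pc_eval \<phi>) UNIV S \<and>
     (\<exists>g. poly3_fun g \<and> (\<forall>t. g (pc_eval \<phi> t) = t))"

definition lin_indep2 :: "pt3 \<Rightarrow> pt3 \<Rightarrow> bool" where
  "lin_indep2 u v \<longleftrightarrow> (\<forall>a b. (case u of (u1, u2, u3) \<Rightarrow> case v of (v1, v2, v3) \<Rightarrow>
       a * u1 + b * v1 = 0 \<and> a * u2 + b * v2 = 0 \<and> a * u3 + b * v3 = 0) \<longrightarrow> a = 0 \<and> b = 0)"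

definition transversal_at :: "pt3 set \<Rightarrow> pt3 set \<Rightarrow> pt3 \<Rightarrow> bool" where
  "transversal_at S1 S2 p \<longleftrightarrow> (\<exists>\<phi>1 \<phi>2 t1 t2. iso_to_line \<phi>1 S1 \<and> iso_to_line \<phi>2 S2 \<and>
      pc_eval \<phi>1 t1 = p \<and> pc_eval \<phi>2 t2 = p \<and> lin_indep2 (pc_deriv \<phi>1 t1) (pc_deriv \<phi>2 t2))"

end

theory Submission
  imports Defs
begin


definition mono3 :: "nat \<times> nat \<times> nat \<Rightarrow> pt3 \<Rightarrow> complex" where
  "mono3 e p = (case e of (i,j,k) \<Rightarrow> case p of (x,y,z) \<Rightarrow> x^i*y^j*z^k)"

lemma poly3_cube:
  "(\<Sum>i\<le>N. \<Sum>j\<le>N. \<Sum>k\<le>N. c i j k * x ^ i * y ^ j * z ^ k)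
   = (\<Sum>e\<in>{..N}\<times>{..N}\<times>{..N}. (case e of (i,j,k) \<Rightarrow> c i j k) * mono3 e (x,y,z))"
  by (simp add: sum.cartesian_product mono3_def case_prod_beta mult.assoc)

lemma poly3_fun_gen:
  fixes S :: "'a set" and c :: "'a \<Rightarrow> complex" and e :: "'a \<Rightarrow> nat \<times> nat \<times> nat"
  assumes "finite S" and "\<And>p. f p = (\<Sum>q\<in>S. c q * mono3 (e q) p)"
  shows "poly3_fun f"
proof -
  define N where "N = Max ((\<lambda>q. fst (e q) + fst (snd (e q)) + snd (snd (e q))) ` S)"
  have N: "fst (e q) \<le> N \<and> fst (snd (e q)) \<le> N \<and> snd (snd (e q)) \<le> N" if "q \<in> S" for q
  proof -
    have "fst (e q) + fst (snd (e q)) + snd (snd (e q)) \<le> N"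
      unfolding N_def by (rule Max_ge) (use assms(1) that in auto)
    then show ?thesis by linarith
  qed
  define d where "d i j k = (\<Sum>q\<in>{q\<in>S. e q = (i,j,k)}. c q)" for i j k
  have "\<forall>x y z. f (x,y,z) = (\<Sum>i\<le>N. \<Sum>j\<le>N. \<Sum>k\<le>N. d i j k * x ^ i * y ^ j * z ^ k)"
  proof (intro allI)
    fix x y z
    have "f (x,y,z) = (\<Sum>q\<in>S. c q * mono3 (e q) (x,y,z))" by (rule assms(2))
    also have "\<dots> = (\<Sum>t\<in>e ` S. \<Sum>q\<in>{q\<in>S. e q = t}. c q * mono3 (e q) (x,y,z))"
      by (rule sum.image_gen[OF assms(1)])
    also have "\<dots> = (\<Sum>t\<in>e ` S. (case t of (i,j,k) \<Rightarrow> d i j k) * mono3 t (x,y,z))"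
      apply (rule sum.cong[OF refl])
      by (auto simp: d_def sum_distrib_right case_prod_beta intro!: sum.cong)
    also have "\<dots> = (\<Sum>t\<in>{..N}\<times>{..N}\<times>{..N}. (case t of (i,j,k) \<Rightarrow> d i j k) * mono3 t (x,y,z))"
    proof (rule sum.mono_neutral_left)
      show "e ` S \<subseteq> {..N}\<times>{..N}\<times>{..N}"
      proof (rule subsetI)
        fix t assume "t \<in> e ` S"
        then obtain q where "q \<in> S" "t = e q" by blast
        then show "t \<in> {..N}\<times>{..N}\<times>{..N}" using N[of q] by (simp add: mem_Times_iff)
      qed
      show "\<forall>t\<in>{..N}\<times>{..N}\<times>{..N} - e ` S. (case t of (i,j,k) \<Rightarrow> d i j k) * mono3 t (x,y,z) = 0"
      proof
        fix t assume "t \<in> {..N}\<times>{..N}\<times>{..N} - e ` S"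
        then have nt: "t \<notin> e ` S" by blast
        have "{q\<in>S. e q = t} = {}" using nt by blast
        note E = this
        obtain i j k where tt: "t = (i,j,k)" by (cases t) auto
        have "d i j k = 0" unfolding d_def tt[symmetric] E by simp
        then show "(case t of (i,j,k) \<Rightarrow> d i j k) * mono3 t (x,y,z) = 0"
          by (simp add: tt)
      qed
    qed auto
    finally show "f (x,y,z) = (\<Sum>i\<le>N. \<Sum>j\<le>N. \<Sum>k\<le>N. d i j k * x ^ i * y ^ j * z ^ k)"
      by (simp add: poly3_cube)
  qed
  then show ?thesis unfolding poly3_fun_def by blast
qed

lemma poly3_fun_repr:
  assumes "poly3_fun f"
  obtains S :: "(nat\<times>nat\<times>nat) set" and c where "finite S" "\<And>p. f p = (\<Sum>q\<in>S. c q * mono3 q p)"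
proof -
  obtain N c where "\<forall>x y z. f (x, y, z) = (\<Sum>i\<le>N. \<Sum>j\<le>N. \<Sum>k\<le>N. c i j k * x ^ i * y ^ j * z ^ k)"
    using assms unfolding poly3_fun_def by blast
  then have "\<And>p. f p = (\<Sum>e\<in>{..N}\<times>{..N}\<times>{..N}. (case e of (i,j,k) \<Rightarrow> c i j k) * mono3 e p)"
  proof -
    fix p :: pt3
    assume A: "\<forall>x y z. f (x, y, z) = (\<Sum>i\<le>N. \<Sum>j\<le>N. \<Sum>k\<le>N. c i j k * x ^ i * y ^ j * z ^ k)"
    obtain x y z where p: "p = (x,y,z)" by (cases p) auto
    show "f p = (\<Sum>e\<in>{..N}\<times>{..N}\<times>{..N}. (case e of (i,j,k) \<Rightarrow> c i j k) * mono3 e p)"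
      unfolding p A[rule_format] by (rule poly3_cube)
  qed
  then show ?thesis using that[of "{..N}\<times>{..N}\<times>{..N}"] by blast
qed

lemma poly3_add:
  assumes "poly3_fun f" "poly3_fun g" shows "poly3_fun (\<lambda>p. f p + g p)"
proof -
  obtain S c where S: "finite S" "\<And>p. f p = (\<Sum>q\<in>S. c q * mono3 q p)" using poly3_fun_repr[OF assms(1)] by blast
  obtain T d where T: "finite T" "\<And>p. g p = (\<Sum>q\<in>T. d q * mono3 q p)" using poly3_fun_repr[OF assms(2)] by blast
  show ?thesis
  proof (rule poly3_fun_gen[where S="S <+> T" and c="case_sum c d" and e="case_sum id id"])
    show "finite (S <+> T)" using S T by simp
    fix p
    show "f p + g p = (\<Sum>q\<in>S <+> T. case_sum c d q * mono3 (case_sum id id q) p)"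
    proof -
      have "(\<Sum>q\<in>S <+> T. case_sum c d q * mono3 (case_sum id id q) p)
          = (\<Sum>q\<in>Inl ` S. case_sum c d q * mono3 (case_sum id id q) p) + (\<Sum>q\<in>Inr ` T. case_sum c d q * mono3 (case_sum id id q) p)"
        unfolding Plus_def by (rule sum.union_disjoint) (use S T in auto)
      also have "\<dots> = f p + g p"
        by (simp add: sum.reindex S(2) T(2))
      finally show ?thesis by simp
    qed
  qed
qed

lemma poly3_mult:
  assumes "poly3_fun f" "poly3_fun g" shows "poly3_fun (\<lambda>p. f p * g p)"
proof -
  obtain S c where S: "finite S" "\<And>p. f p = (\<Sum>q\<in>S. c q * mono3 q p)" using poly3_fun_repr[OF assms(1)] by blast
  obtain T d where T: "finite T" "\<And>p. g p = (\<Sum>q\<in>T. d q * mono3 q p)" using poly3_fun_repr[OF assms(2)] by blast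
  define c' where "c' = (\<lambda>(q::nat\<times>nat\<times>nat,r::nat\<times>nat\<times>nat). c q * d r)"
  define e' where "e' = (\<lambda>((a1::nat,b1::nat,c1::nat),(a2::nat,b2::nat,c2::nat)). (a1+a2,b1+b2,c1+c2))"
  have eq: "f p * g p = (\<Sum>q\<in>S \<times> T. c' q * mono3 (e' q) p)" for p :: pt3
  proof -
    obtain x y z where p: "p = (x,y,z)" by (cases p) auto
    have "f p * g p = (\<Sum>q\<in>S. \<Sum>r\<in>T. c q * mono3 q p * (d r * mono3 r p))"
      by (simp add: S(2) T(2) sum_product)
    also have "\<dots> = (\<Sum>(q,r)\<in>S\<times>T. c q * mono3 q p * (d r * mono3 r p))"
      by (rule sum.cartesian_product)
    also have "\<dots> = (\<Sum>q\<in>S \<times> T. c' q * mono3 (e' q) p)"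
      by (rule sum.cong) (auto simp: p mono3_def power_add c'_def e'_def)
    finally show ?thesis .
  qed
  show ?thesis by (rule poly3_fun_gen[OF _ eq]) (use S T in simp)
qed

lemma poly3_const: "poly3_fun (\<lambda>p. a)"
  by (rule poly3_fun_gen[where S="{()}" and c="\<lambda>_. a" and e="\<lambda>_. (0,0,0)"]) (auto simp: mono3_def split: prod.splits)

lemma poly3_x: "poly3_fun (\<lambda>p. fst p)"
  by (rule poly3_fun_gen[where S="{()}" and c="\<lambda>_. 1" and e="\<lambda>_. (1,0,0)"]) (auto simp: mono3_def split: prod.splits)
lemma poly3_y: "poly3_fun (\<lambda>p. fst (snd p))"
  by (rule poly3_fun_gen[where S="{()}" and c="\<lambda>_. 1" and e="\<lambda>_. (0,1,0)"]) (auto simp: mono3_def split: prod.splits)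
lemma poly3_z: "poly3_fun (\<lambda>p. snd (snd p))"
  by (rule poly3_fun_gen[where S="{()}" and c="\<lambda>_. 1" and e="\<lambda>_. (0,0,1)"]) (auto simp: mono3_def split: prod.splits)

lemma poly3_sum:
  assumes "finite A" "\<And>a. a \<in> A \<Longrightarrow> poly3_fun (f a)" shows "poly3_fun (\<lambda>p. \<Sum>a\<in>A. f a p)"
  using assms by (induction A rule: finite_induct) (auto intro: poly3_add poly3_const)

lemma poly3_pow:
  assumes "poly3_fun f" shows "poly3_fun (\<lambda>p. f p ^ k)"
  by (induction k) (auto intro: poly3_mult poly3_const assms)

lemma poly3_diff:
  assumes "poly3_fun f" "poly3_fun g" shows "poly3_fun (\<lambda>p. f p - g p)"
proof -
  have "poly3_fun (\<lambda>p. f p + (-1) * g p)" by (intro poly3_add poly3_mult poly3_const assms)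
  then show ?thesis by simp
qed

lemma poly3_comp:
  assumes "poly3_fun f" "poly3_fun g1" "poly3_fun g2" "poly3_fun g3"
  shows "poly3_fun (\<lambda>p. f (g1 p, g2 p, g3 p))"
proof -
  obtain S c where S: "finite S" "\<And>p. f p = (\<Sum>q\<in>S. c q * mono3 q p)" using poly3_fun_repr[OF assms(1)] by blast
  have "poly3_fun (\<lambda>p. \<Sum>q\<in>S. c q * (g1 p ^ fst q * g2 p ^ fst (snd q) * g3 p ^ snd (snd q)))"
    by (intro poly3_sum S poly3_mult poly3_const poly3_pow assms)
  then show ?thesis by (simp add: S(2) mono3_def case_prod_beta)
qed

lemma poly3_upoly:
  assumes "poly3_fun g" shows "poly3_fun (\<lambda>p. poly q (g p))"
  unfolding poly_altdef by (intro poly3_sum poly3_mult poly3_const poly3_pow assms) auto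

lemma poly3_along_curve:
  assumes "poly3_fun f" shows "\<exists>r. \<forall>t. f (pc_eval \<phi> t) = poly r t"
proof -
  obtain p1 p2 p3 where phi: "\<phi> = (p1,p2,p3)" by (cases \<phi>) auto
  obtain S c where S: "finite S" "\<And>p. f p = (\<Sum>q\<in>S. c q * mono3 q p)" using poly3_fun_repr[OF assms(1)] by blast
  show ?thesis
    apply (rule exI[of _ "\<Sum>q\<in>S. smult (c q) (p1 ^ fst q * p2 ^ fst (snd q) * p3 ^ snd (snd q))"])
    by (simp add: S(2) poly_sum phi pc_eval_def mono3_def case_prod_beta)
qed


lemma mat2_eq: "(A::mat2) = B \<longleftrightarrow> A$1$1 = B$1$1 \<and> A$1$2 = B$1$2 \<and> A$2$1 = B$2$1 \<and> A$2$2 = B$2$2"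
  by (simp add: vec_eq_iff forall_2)
lemma mm: "((A::mat2) ** B)$i$j = A$i$1*B$1$j + A$i$2*B$2$j"
  by (simp add: matrix_matrix_mult_def sum_2)
lemma tr2: "trace (A::mat2) = A$1$1 + A$2$2"
  by (simp add: trace_def sum_2)
lemma mat1e: "(mat 1::mat2)$1$1 = 1" "(mat 1::mat2)$2$2 = 1" "(mat 1::mat2)$1$2 = 0" "(mat 1::mat2)$2$1 = 0"
  by (simp_all add: mat_def)

definition lin4 :: "complex \<Rightarrow> complex \<Rightarrow> complex \<Rightarrow> complex \<Rightarrow> mat2 \<Rightarrow> mat2 \<Rightarrow> mat2" where
  "lin4 a b c d A B = (\<chi> i j. a * (mat 1::mat2)$i$j + b * A$i$j + c * B$i$j + d * (A**B)$i$j)"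

lemma lin4e: "lin4 a b c d A B $ i $ j = a * (mat 1::mat2)$i$j + b * A$i$j + c * B$i$j + d * (A**B)$i$j"
  by (simp add: lin4_def)

definition adj2 :: "mat2 \<Rightarrow> mat2" where
  "adj2 A = (\<chi> i j. if i = j then (if i = 1 then A$2$2 else A$1$1) else - A$i$j)"

lemma adj2e: "adj2 A $1$1 = A$2$2" "adj2 A $2$2 = A$1$1" "adj2 A $1$2 = - A$1$2" "adj2 A $2$1 = - A$2$1"
  by (simp_all add: adj2_def)

lemma matrix_inv_eqI:
  fixes A A' :: mat2
  assumes "A ** A' = mat 1" "A' ** A = mat 1" shows "matrix_inv A = A'"
proof -
  let ?P = "\<lambda>A''. A ** A'' = mat 1 \<and> A'' ** A = mat 1"
  have "?P (matrix_inv A)" unfolding matrix_inv_def by (rule someI[of ?P A']) (use assms in auto)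
  then have "matrix_inv A = matrix_inv A ** (A ** A')" by (simp add: assms)
  also have "\<dots> = A'" using \<open>?P (matrix_inv A)\<close> by (simp add: matrix_mul_assoc)
  finally show ?thesis .
qed

lemma inv_det1: assumes "det (A::mat2) = 1" shows "matrix_inv A = adj2 A"
  by (rule matrix_inv_eqI) (use assms in \<open>auto simp: mat2_eq mm adj2e mat1e det_2 algebra_simps\<close>)

lemma actA: assumes "det (A::mat2) = 1"
  shows "A ** lin4 a b c d A B = lin4 (-b) (a + trace A*b) (-d) (c + trace A*d) A B"
  using assms unfolding mat2_eq mm lin4e tr2 mat1e det_2
  by (intro conjI; algebra)

lemma actB: assumes "det (B::mat2) = 1"
  shows "B ** lin4 a b c d A B = lin4 (b*(trace (A**B) - trace A * trace B) - c - trace A * d) (trace B * b + d)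
     (a + trace A * b + trace B * c + trace (A**B) * d) (-b) A B"
  using assms unfolding mat2_eq mm lin4e tr2 mat1e det_2
  by (intro conjI; algebra)

lemma actAi: assumes "det (A::mat2) = 1"
  shows "matrix_inv A ** lin4 a b c d A B = lin4 (trace A * a + b) (-a) (trace A * c + d) (-c) A B"
  using assms unfolding inv_det1[OF assms] mat2_eq mm lin4e tr2 mat1e det_2 adj2e
  by (intro conjI; algebra)

lemma actBi: assumes "det (B::mat2) = 1"
  shows "matrix_inv B ** lin4 a b c d A B = lin4 (trace B * a - b*(trace (A**B) - trace A * trace B) + c + trace A * d) (-d)
     (-a - trace A * b - trace (A**B) * d) (trace B * d + b) A B"
  using assms unfolding inv_det1[OF assms] mat2_eq mm lin4e tr2 mat1e det_2 adj2e
  by (intro conjI; algebra)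

definition tr3 :: "mat2 \<Rightarrow> mat2 \<Rightarrow> pt3" where
  "tr3 A B = (trace A, trace B, trace (A ** B))"

lemma word_lin:
  "\<exists>a b c d. poly3_fun a \<and> poly3_fun b \<and> poly3_fun c \<and> poly3_fun d \<and>
     (\<forall>A B. det A = 1 \<longrightarrow> det B = 1 \<longrightarrow>
        word_mat A B w = lin4 (a (tr3 A B)) (b (tr3 A B)) (c (tr3 A B)) (d (tr3 A B)) A B)"
proof (induction w)
  case Nil
  show ?case
    apply (rule exI[of _ "\<lambda>_. 1"], rule exI[of _ "\<lambda>_. 0"], rule exI[of _ "\<lambda>_. 0"], rule exI[of _ "\<lambda>_. 0"])
    by (simp add: poly3_const mat2_eq lin4e mat1e)
next
  case (Cons l w)
  then obtain a b c d where P: "poly3_fun a" "poly3_fun b" "poly3_fun c" "poly3_fun d"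
    and W: "\<And>A B. det A = 1 \<Longrightarrow> det B = 1 \<Longrightarrow>
        word_mat A B w = lin4 (a (tr3 A B)) (b (tr3 A B)) (c (tr3 A B)) (d (tr3 A B)) A B" by blast
  note pp = poly3_add poly3_mult poly3_diff poly3_const poly3_x poly3_y poly3_z P
  let ?x = "\<lambda>p::pt3. fst p" and ?y = "\<lambda>p::pt3. fst (snd p)" and ?z = "\<lambda>p::pt3. snd (snd p)"
  show ?case
  proof (cases l)
    case Lx
    show ?thesis
      apply (rule exI[of _ "\<lambda>p. - b p"], rule exI[of _ "\<lambda>p. a p + ?x p * b p"],
             rule exI[of _ "\<lambda>p. - d p"], rule exI[of _ "\<lambda>p. c p + ?x p * d p"])
      using pp by (auto simp: Lx W actA tr3_def intro!: pp poly3_diff[of "\<lambda>_. 0", simplified])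
  next
    case Ly
    show ?thesis
      apply (rule exI[of _ "\<lambda>p. b p * (?z p - ?x p * ?y p) - c p - ?x p * d p"], rule exI[of _ "\<lambda>p. ?y p * b p + d p"],
             rule exI[of _ "\<lambda>p. a p + ?x p * b p + ?y p * c p + ?z p * d p"], rule exI[of _ "\<lambda>p. - b p"])
      using pp by (auto simp: Ly W actB tr3_def intro!: pp poly3_diff[of "\<lambda>_. 0", simplified])
  next
    case Lxi
    show ?thesis
      apply (rule exI[of _ "\<lambda>p. ?x p * a p + b p"], rule exI[of _ "\<lambda>p. - a p"],
             rule exI[of _ "\<lambda>p. ?x p * c p + d p"], rule exI[of _ "\<lambda>p. - c p"])
      using pp by (auto simp: Lxi W actAi tr3_def intro!: pp poly3_diff[of "\<lambda>_. 0", simplified])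
  next
    case Lyi
    show ?thesis
      apply (rule exI[of _ "\<lambda>p. ?y p * a p - b p * (?z p - ?x p * ?y p) + c p + ?x p * d p"], rule exI[of _ "\<lambda>p. - d p"],
             rule exI[of _ "\<lambda>p. - a p - ?x p * b p - ?z p * d p"], rule exI[of _ "\<lambda>p. ?y p * d p + b p"])
      using pp by (auto simp: Lyi W actBi tr3_def intro!: pp poly3_diff[of "\<lambda>_. 0", simplified])
  qed
qed

lemma trace_lin4: "trace (lin4 a b c d A B) = 2 * a + b * trace A + c * trace B + d * trace (A ** B)"
  by (simp add: tr2 lin4e mat1e algebra_simps)

lemma trace_poly:
  "\<exists>P. poly3_fun P \<and> (\<forall>A B. det A = 1 \<longrightarrow> det B = 1 \<longrightarrow> chi A B w = P (tr3 A B))"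
proof -
  obtain a b c d where P: "poly3_fun a" "poly3_fun b" "poly3_fun c" "poly3_fun d"
    and W: "\<And>A B. det A = 1 \<Longrightarrow> det B = 1 \<Longrightarrow>
        word_mat A B w = lin4 (a (tr3 A B)) (b (tr3 A B)) (c (tr3 A B)) (d (tr3 A B)) A B"
    using word_lin[of w] by blast
  show ?thesis
    apply (rule exI[of _ "\<lambda>p. 2 * a p + b p * fst p + c p * fst (snd p) + d p * snd (snd p)"])
    by (auto simp: chi_def W trace_lin4 tr3_def intro!: poly3_add poly3_mult poly3_const poly3_x poly3_y poly3_z P)
qed


fun cheb :: "nat \<Rightarrow> complex poly" where
  "cheb 0 = [:2:]"
| "cheb (Suc 0) = [:0,1:]"
| "cheb (Suc (Suc k)) = [:0,1:] * cheb (Suc k) - cheb k"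

lemma cheb_eval: "t \<noteq> 0 \<Longrightarrow> poly (cheb k) (t + inverse t) = t^k + inverse t ^ k"
proof (induction k rule: cheb.induct)
  case (3 k)
  then show ?case by (simp add: field_simps power_Suc)
qed auto

lemma tinv_surj: "\<exists>t. t \<noteq> 0 \<and> t + inverse t = (s::complex)"
proof -
  define r where "r = csqrt (s^2 - 4)"
  define t where "t = (s + r) / 2"
  have rr: "r^2 = s^2 - 4" unfolding r_def by simp
  have "t * (s - t) = 1" unfolding t_def using rr by (simp add: field_simps power2_eq_square)
  note eq = this
  have "t \<noteq> 0" using eq by auto
  moreover have "inverse t = s - t" using inverse_unique[OF eq] .
  ultimately show ?thesis by (intro exI[of _ t]) auto
qed

lemma aux_xy:
  fixes u v x y :: complex assumes "x * y = 1"
  shows "(u*x + v * y)*(x+y) = u*x*x + v * y*y + (u+v)"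
proof -
  have "(u*x+v * y)*(x+y) = u*x*x + v * y*y + u*(x*y) + v * (x*y)" by (simp add: algebra_simps)
  then show ?thesis using assms by simp
qed

lemma cheb_prod: "poly (cheb a) s * poly (cheb b) s = poly (cheb (a+b)) s + poly (cheb (a-b)) s" if "b \<le> a"
proof -
  obtain t where t: "t \<noteq> 0" "t + inverse t = s" using tinv_surj by blast
  have e: "t ^ a = t ^ (a - b) * t ^ b" "inverse t ^ a = inverse t ^ (a - b) * inverse t ^ b"
    using that by (simp_all add: power_add[symmetric])
  have ti: "t ^ b * inverse t ^ b = 1" using t(1) by (simp add: power_mult_distrib[symmetric])
  show ?thesis unfolding t(2)[symmetric] cheb_eval[OF t(1)] e power_add
    using aux_xy[OF ti] by simp
qed

lemma cheb_recover:
  assumes "coprime a b" "0 < a" "0 < b"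
  shows "\<exists>g. poly3_fun g \<and> (\<forall>s. g (poly (cheb a) s, poly (cheb b) s, poly (cheb (a+b)) s) = s)"
  using assms
proof (induction "a + b" arbitrary: a b rule: less_induct)
  case less
  show ?case
  proof (cases "a = b")
    case True
    then have "a = 1" using less.prems by (simp add: coprime_self)
    then show ?thesis using True by (intro exI[of _ fst]) (simp add: poly3_x)
  next
    case False
    show ?thesis
    proof (cases "b < a")
      case True
      have cp: "coprime (a - b) b" using less.prems(1) True by (simp add: coprime_iff_gcd_eq_1 gcd_diff1_nat)
      obtain g where g: "poly3_fun g" "\<forall>s. g (poly (cheb (a-b)) s, poly (cheb b) s, poly (cheb (a-b+b)) s) = s"
        using less.hyps[of "a-b" b] cp True less.prems by auto
      show ?thesis
      proof (intro exI conjI allI)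
        show "poly3_fun (\<lambda>p. g (fst p * fst (snd p) - snd (snd p), fst (snd p), fst p))"
          by (intro poly3_comp g poly3_diff poly3_mult poly3_x poly3_y poly3_z)
        fix s
        have "poly (cheb (a-b)) s = poly (cheb a) s * poly (cheb b) s - poly (cheb (a+b)) s"
          using cheb_prod[of b a s] True by simp
        then show "(\<lambda>p. g (fst p * fst (snd p) - snd (snd p), fst (snd p), fst p))
            (poly (cheb a) s, poly (cheb b) s, poly (cheb (a+b)) s) = s"
          using g(2)[rule_format, of s] True by simp
      qed
    next
      case False2: False
      then have ab: "a < b" using False by simp
      have cp: "coprime a (b - a)" using less.prems(1) ab
        by (metis coprime_commute coprime_iff_gcd_eq_1 gcd_diff1_nat less_imp_le_nat)
      obtain g where g: "poly3_fun g" "\<forall>s. g (poly (cheb a) s, poly (cheb (b-a)) s, poly (cheb (a+(b-a))) s) = s"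
        using less.hyps[of a "b-a"] cp ab less.prems by auto
      show ?thesis
      proof (intro exI conjI allI)
        show "poly3_fun (\<lambda>p. g (fst p, fst p * fst (snd p) - snd (snd p), fst (snd p)))"
          by (intro poly3_comp g poly3_diff poly3_mult poly3_x poly3_y poly3_z)
        fix s
        have "poly (cheb (b-a)) s = poly (cheb a) s * poly (cheb b) s - poly (cheb (a+b)) s"
          using cheb_prod[of a b s] ab by (simp add: mult.commute add.commute)
        then show "(\<lambda>p. g (fst p, fst p * fst (snd p) - snd (snd p), fst (snd p)))
            (poly (cheb a) s, poly (cheb b) s, poly (cheb (a+b)) s) = s"
          using g(2)[rule_format, of s] ab by simp
      qed
    qed
  qed
qed

definition tt :: "nat \<Rightarrow> complex \<Rightarrow> complex" where
  "tt k t = t^k + inverse t ^ k"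

definition RedS :: "nat \<Rightarrow> nat \<Rightarrow> pt3 set" where
  "RedS m n = {(tt n t, tt m t, tt (n+m) t) | t. t \<noteq> 0}"

definition phiR :: "nat \<Rightarrow> nat \<Rightarrow> pcurve" where
  "phiR m n = (cheb n, cheb m, cheb (n+m))"

lemma phiR_eval: "t \<noteq> 0 \<Longrightarrow> pc_eval (phiR m n) (t + inverse t) = (tt n t, tt m t, tt (n+m) t)"
  by (simp add: phiR_def pc_eval_def cheb_eval tt_def)

lemma RedS_range: "RedS m n = range (pc_eval (phiR m n))"
proof
  show "RedS m n \<subseteq> range (pc_eval (phiR m n))"
    unfolding RedS_def using phiR_eval by (auto simp del: pc_eval_def) (metis rangeI)
  show "range (pc_eval (phiR m n)) \<subseteq> RedS m n"
  proof
    fix p assume "p \<in> range (pc_eval (phiR m n))"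
    then obtain s where "p = pc_eval (phiR m n) s" by blast
    moreover obtain t where "t \<noteq> 0" "t + inverse t = s" using tinv_surj by blast
    ultimately show "p \<in> RedS m n" unfolding RedS_def using phiR_eval by blast
  qed
qed

lemma phiR_inv:
  assumes "coprime m n" "0 < m" "0 < n"
  shows "\<exists>g. poly3_fun g \<and> (\<forall>s. g (pc_eval (phiR m n) s) = s)"
  using cheb_recover[of n m] assms by (simp add: phiR_def pc_eval_def coprime_commute)

lemma iso_phiR:
  assumes "coprime m n" "0 < m" "0 < n"
  shows "iso_to_line (phiR m n) (RedS m n)"
proof -
  obtain g where g: "poly3_fun g" "\<forall>s. g (pc_eval (phiR m n) s) = s" using phiR_inv[OF assms] by blast
  have "inj (pc_eval (phiR m n))" by (metis g(2) injI)
  then show ?thesis unfolding iso_to_line_def RedS_range bij_betw_def using g by blast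
qed

lemma iso_zclosed:
  assumes "iso_to_line \<phi> S" shows "zclosed S"
proof -
  obtain g where g: "poly3_fun g" "\<forall>t. g (pc_eval \<phi> t) = t" using assms unfolding iso_to_line_def by blast
  have S: "S = range (pc_eval \<phi>)" using assms unfolding iso_to_line_def bij_betw_def by blast
  obtain p1 p2 p3 where phi: "\<phi> = (p1,p2,p3)" by (cases \<phi>) auto
  let ?F = "{\<lambda>p. fst p - poly p1 (g p), \<lambda>p. fst (snd p) - poly p2 (g p), \<lambda>p. snd (snd p) - poly p3 (g p)}"
  have "\<forall>f\<in>?F. poly3_fun f" by (auto intro!: poly3_diff poly3_upoly g poly3_x poly3_y poly3_z)
  moreover have "S = {p. \<forall>f\<in>?F. f p = 0}"
  proof (rule set_eqI, rule iffI)
    fix p assume "p \<in> S"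
    then obtain t where "p = pc_eval \<phi> t" using S by blast
    then show "p \<in> {p. \<forall>f\<in>?F. f p = 0}" using g(2) by (auto simp: phi pc_eval_def)
  next
    fix p assume "p \<in> {p. \<forall>f\<in>?F. f p = 0}"
    then have "p = pc_eval \<phi> (g p)" by (cases p) (auto simp: phi pc_eval_def)
    then show "p \<in> S" using S by blast
  qed
  ultimately show ?thesis unfolding zclosed_def by blast
qed


lemma zclosed_Un: assumes "zclosed A" "zclosed B" shows "zclosed (A \<union> B)"
proof -
  obtain F where F: "\<forall>f\<in>F. poly3_fun f" "A = {p. \<forall>f\<in>F. f p = 0}" using assms(1) unfolding zclosed_def by blast
  obtain G where G: "\<forall>f\<in>G. poly3_fun f" "B = {p. \<forall>f\<in>G. f p = 0}" using assms(2) unfolding zclosed_def by blast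
  define H where "H = (\<lambda>(f,g). (\<lambda>p. f p * g p)) ` (F \<times> G)"
  have "\<forall>h\<in>H. poly3_fun h"
  proof
    fix h assume "h \<in> H"
    then obtain f g where "h = (\<lambda>p. f p * g p)" "f \<in> F" "g \<in> G" unfolding H_def by auto
    then show "poly3_fun h" using F(1) G(1) by (simp add: poly3_mult)
  qed
  moreover have "A \<union> B = {p. \<forall>h\<in>H. h p = 0}"
  proof (rule set_eqI, rule iffI)
    fix p assume p: "p \<in> A \<union> B"
    show "p \<in> {p. \<forall>h\<in>H. h p = 0}"
    proof (rule CollectI, rule ballI)
      fix h assume "h \<in> H"
      then obtain f g where h: "h = (\<lambda>p. f p * g p)" "f \<in> F" "g \<in> G" unfolding H_def by auto
      have "f p = 0 \<or> g p = 0" using p h(2,3) unfolding F(2) G(2) by auto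
      then show "h p = 0" using h(1) by auto
    qed
  next
    fix p assume p: "p \<in> {p. \<forall>h\<in>H. h p = 0}"
    show "p \<in> A \<union> B"
    proof (rule ccontr)
      assume "p \<notin> A \<union> B"
      then have "p \<notin> A" "p \<notin> B" by auto
      then obtain f g where fg: "f \<in> F" "f p \<noteq> 0" "g \<in> G" "g p \<noteq> 0" unfolding F(2) G(2) by auto
      then have "(\<lambda>q. f q * g q) \<in> H" unfolding H_def by (intro image_eqI[of _ _ "(f,g)"]) auto
      moreover have pH: "\<forall>h\<in>H. h p = 0" using p by simp
      ultimately have "(\<lambda>q. f q * g q) p = 0" by (rule bspec[rotated])
      then have "f p * g p = 0" by simp
      then show False using fg by simp
    qed
  qed
  ultimately show ?thesis unfolding zclosed_def by blast
qed

lemma zclosed_empty: "zclosed {}"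
  unfolding zclosed_def by (rule exI[of _ "{\<lambda>_. 1}"]) (auto intro: poly3_const)

lemma zclosed_Union: "finite FF \<Longrightarrow> (\<forall>F\<in>FF. zclosed F) \<Longrightarrow> zclosed (\<Union>FF)"
proof (induction FF rule: finite_induct)
  case empty then show ?case by (simp add: zclosed_empty)
next
  case (insert F FF) then show ?case using zclosed_Un[of F "\<Union>FF"] by simp
qed

lemma zirredD: "zirred S \<Longrightarrow> zclosed A \<Longrightarrow> zclosed B \<Longrightarrow> S \<subseteq> A \<union> B \<Longrightarrow> S \<subseteq> A \<or> S \<subseteq> B"
  unfolding zirred_def by blast

lemma zirred_subset_Union:
  assumes "finite FF" "zirred T" "\<forall>F\<in>FF. zclosed F" "T \<subseteq> \<Union>FF"
  shows "\<exists>F\<in>FF. T \<subseteq> F"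
  using assms
proof (induction FF rule: finite_induct)
  case empty then show ?case unfolding zirred_def by auto
next
  case (insert F FF)
  have "T \<subseteq> F \<union> \<Union>FF" using insert.prems by auto
  moreover have "zclosed F" "zclosed (\<Union>FF)" using insert.prems insert.hyps by (auto intro: zclosed_Union)
  ultimately have "T \<subseteq> F \<or> T \<subseteq> \<Union>FF" using zirredD[OF insert.prems(1)] by blast
  then show ?case using insert by blast
qed

lemma zcomponents_Union:
  assumes "finite FF" "\<forall>F\<in>FF. zirred F" "\<forall>F\<in>FF. \<forall>F'\<in>FF. F \<subseteq> F' \<longrightarrow> F = F'"
  shows "zcomponents (\<Union>FF) = FF"
proof -
  have cl: "\<forall>F\<in>FF. zclosed F" using assms(2) unfolding zirred_def by blast
  show ?thesis
  proof (rule set_eqI, rule iffI)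
    fix T assume "T \<in> zcomponents (\<Union>FF)"
    then have T: "T \<subseteq> \<Union>FF" "zirred T" "\<And>T'. T \<subseteq> T' \<Longrightarrow> T' \<subseteq> \<Union>FF \<Longrightarrow> zirred T' \<Longrightarrow> T' = T"
      unfolding zcomponents_def by auto
    obtain F where F: "F \<in> FF" "T \<subseteq> F" using zirred_subset_Union[OF assms(1) T(2) cl T(1)] by blast
    have "F = T" using T(3)[OF F(2)] F assms(2) by blast
    then show "T \<in> FF" using F by simp
  next
    fix T assume T: "T \<in> FF"
    have "T' = T" if h: "T \<subseteq> T'" "T' \<subseteq> \<Union>FF" "zirred T'" for T'
    proof -
      obtain F where F: "F \<in> FF" "T' \<subseteq> F" using zirred_subset_Union[OF assms(1) h(3) cl h(2)] by blast
      then have "T = F" using assms(3) T h(1) by blast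
      then show ?thesis using F h(1) by blast
    qed
    then show "T \<in> zcomponents (\<Union>FF)" unfolding zcomponents_def using T assms(2) by blast
  qed
qed

lemma zirred_range:
  assumes "zclosed (range (pc_eval \<phi>))" shows "zirred (range (pc_eval \<phi>))"
  unfolding zirred_def
proof (intro conjI allI impI assms)
  show "range (pc_eval \<phi>) \<noteq> {}" by simp
  fix A B assume A: "zclosed A" and B: "zclosed B" and sub: "range (pc_eval \<phi>) \<subseteq> A \<union> B"
  show "range (pc_eval \<phi>) \<subseteq> A \<or> range (pc_eval \<phi>) \<subseteq> B"
  proof (rule ccontr)
    assume "\<not> ?thesis"
    then obtain t0 t1 where t0: "pc_eval \<phi> t0 \<notin> A" and t1: "pc_eval \<phi> t1 \<notin> B" by blast
    obtain F where F: "\<forall>f\<in>F. poly3_fun f" "A = {p. \<forall>f\<in>F. f p = 0}" using A unfolding zclosed_def by blast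
    obtain G where G: "\<forall>f\<in>G. poly3_fun f" "B = {p. \<forall>f\<in>G. f p = 0}" using B unfolding zclosed_def by blast
    obtain f where f: "f \<in> F" "f (pc_eval \<phi> t0) \<noteq> 0" using t0 F by auto
    obtain g where g: "g \<in> G" "g (pc_eval \<phi> t1) \<noteq> 0" using t1 G by auto
    obtain r1 where r1: "\<forall>t. f (pc_eval \<phi> t) = poly r1 t" using poly3_along_curve F f by blast
    obtain r2 where r2: "\<forall>t. g (pc_eval \<phi> t) = poly r2 t" using poly3_along_curve G g by blast
    have "r1 \<noteq> 0" using f r1 by auto
    moreover have "r2 \<noteq> 0" using g r2 by auto
    ultimately have nz: "r1 * r2 \<noteq> 0" by simp
    have "poly (r1 * r2) t = 0" for t
    proof -
      have "pc_eval \<phi> t \<in> A \<union> B" using sub by blast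
      then have "f (pc_eval \<phi> t) = 0 \<or> g (pc_eval \<phi> t) = 0" using F G f g by auto
      then show ?thesis using r1 r2 by auto
    qed
    then have E: "{t. poly (r1*r2) t = 0} = UNIV" by auto
    have "finite {t. poly (r1*r2) t = 0}" by (rule poly_roots_finite[OF nz])
    then have "finite (UNIV::complex set)" by (simp only: E)
    then show False using infinite_UNIV_char_0 by blast
  qed
qed

lemma iso_zirred: assumes "iso_to_line \<phi> S" shows "zirred S"
proof -
  have S: "S = range (pc_eval \<phi>)" using assms unfolding iso_to_line_def bij_betw_def by blast
  show ?thesis using zirred_range iso_zclosed[OF assms] S by simp
qed

definition LineS :: "complex \<Rightarrow> complex \<Rightarrow> pt3 set" where
  "LineS a b = {(a, b, z) | z. True}"

definition phiL :: "complex \<Rightarrow> complex \<Rightarrow> pcurve" where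
  "phiL a b = ([:a:], [:b:], [:0,1:])"

lemma iso_phiL: "iso_to_line (phiL a b) (LineS a b)"
  unfolding iso_to_line_def bij_betw_def
proof (intro conjI exI[of _ "\<lambda>p. snd (snd p)"] poly3_z allI)
  show "inj (pc_eval (phiL a b))" by (rule injI) (simp add: pc_eval_def phiL_def)
  show "range (pc_eval (phiL a b)) = LineS a b" by (auto simp: pc_eval_def phiL_def LineS_def)
  fix t show "snd (snd (pc_eval (phiL a b) t)) = t" by (simp add: pc_eval_def phiL_def)
qed

lemma pc_deriv_phiL: "pc_deriv (phiL a b) t = (0, 0, 1)"
  by (simp add: pc_deriv_def phiL_def pderiv_pCons)


definition eig :: "mat2 \<Rightarrow> complex \<Rightarrow> complex \<Rightarrow> complex \<Rightarrow> bool" where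
  "eig X a v1 v2 \<longleftrightarrow> (v1 \<noteq> 0 \<or> v2 \<noteq> 0) \<and> X$1$1* v1 + X$1$2* v2 = a* v1 \<and> X$2$1* v1 + X$2$2* v2 = a* v2"

lemma quad_root: "\<exists>a::complex. a^2 - b*a + c = 0"
proof -
  define r where "r = csqrt (b^2 - 4*c)"
  have rr: "r^2 = b^2 - 4*c" unfolding r_def by simp
  show ?thesis by (rule exI[of _ "(b + r)/2"]) (simp add: field_simps power2_eq_square rr[unfolded power2_eq_square] algebra_simps)
qed

lemma eig_exists: "\<exists>a v1 v2. eig X a v1 v2"
proof -
  obtain a where a: "a^2 - trace X * a + det X = 0" using quad_root by blast
  define n11 where "n11 = X$1$1 - a"
  define n22 where "n22 = X$2$2 - a"
  have dn: "n11 * n22 - X$1$2 * X$2$1 = 0" using a unfolding n11_def n22_def tr2 det_2 by (simp add: algebra_simps power2_eq_square)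
  show ?thesis
  proof (cases "n11 = 0 \<and> X$1$2 = 0")
    case False
    have "eig X a (X$1$2) (- n11)" unfolding eig_def using False dn
      by (auto simp: n11_def n22_def algebra_simps)
    then show ?thesis by blast
  next
    case True
    show ?thesis
    proof (cases "n22 = 0 \<and> X$2$1 = 0")
      case True2: True
      have "eig X a 1 0" unfolding eig_def using True True2 by (auto simp: n11_def n22_def)
      then show ?thesis by blast
    next
      case False
      have "eig X a n22 (- X$2$1)" unfolding eig_def using True False dn
        by (auto simp: n11_def n22_def algebra_simps)
      then show ?thesis by blast
    qed
  qed
qed

lemma eig_charpoly: assumes "eig X a v1 v2" shows "a^2 - trace X * a + det X = 0"
proof -
  have e: "(X$1$1 - a)* v1 + X$1$2* v2 = 0" "X$2$1* v1 + (X$2$2 - a)* v2 = 0"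
    using assms unfolding eig_def by (auto simp: algebra_simps)
  define d where "d = (X$1$1 - a)*(X$2$2 - a) - X$1$2 * X$2$1"
  have "d * v1 = (X$2$2 - a) * ((X$1$1 - a)* v1 + X$1$2* v2) - X$1$2 * (X$2$1* v1 + (X$2$2 - a)* v2)"
    unfolding d_def by (simp add: algebra_simps)
  then have d1: "d * v1 = 0" using e by simp
  have "d * v2 = (X$1$1 - a) * (X$2$1* v1 + (X$2$2 - a)* v2) - X$2$1 * ((X$1$1 - a)* v1 + X$1$2* v2)"
    unfolding d_def by (simp add: algebra_simps)
  then have d2: "d * v2 = 0" using e by simp
  have "d = 0" using d1 d2 assms unfolding eig_def by auto
  then show ?thesis unfolding d_def tr2 det_2 by (simp add: algebra_simps power2_eq_square)
qed

lemma eig_det1: assumes "eig X a v1 v2" "det X = 1" shows "a \<noteq> 0" "trace X = a + inverse a"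
proof -
  have c: "a^2 - trace X * a + 1 = 0" using eig_charpoly[OF assms(1)] assms(2) by simp
  then show "a \<noteq> 0" by auto
  then show "trace X = a + inverse a" using c by (simp add: field_simps power2_eq_square)
qed

lemma eig_mult: "eig X a v1 v2 \<Longrightarrow> eig Y b v1 v2 \<Longrightarrow> eig (X ** Y) (a*b) v1 v2"
  unfolding eig_def mm
proof (elim conjE, intro conjI)
  assume h: "X $ 1 $ 1 * v1 + X $ 1 $ 2 * v2 = a * v1" "X $ 2 $ 1 * v1 + X $ 2 $ 2 * v2 = a * v2"
     "Y $ 1 $ 1 * v1 + Y $ 1 $ 2 * v2 = b * v1" "Y $ 2 $ 1 * v1 + Y $ 2 $ 2 * v2 = b * v2"
  have "(X $ 1 $ 1 * Y $ 1 $ 1 + X $ 1 $ 2 * Y $ 2 $ 1) * v1 + (X $ 1 $ 1 * Y $ 1 $ 2 + X $ 1 $ 2 * Y $ 2 $ 2) * v2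
      = X $ 1 $ 1 * (Y $ 1 $ 1 * v1 + Y $ 1 $ 2 * v2) + X $ 1 $ 2 * (Y $ 2 $ 1 * v1 + Y $ 2 $ 2 * v2)"
    by (simp add: algebra_simps)
  also have "\<dots> = b * (X $ 1 $ 1 * v1 + X $ 1 $ 2 * v2)" by (simp only: h(3) h(4)) (simp add: algebra_simps)
  also have "\<dots> = a * b * v1" by (simp only: h(1)) (simp add: algebra_simps)
  finally show "(X $ 1 $ 1 * Y $ 1 $ 1 + X $ 1 $ 2 * Y $ 2 $ 1) * v1 + (X $ 1 $ 1 * Y $ 1 $ 2 + X $ 1 $ 2 * Y $ 2 $ 2) * v2 = a * b * v1" .
  have "(X $ 2 $ 1 * Y $ 1 $ 1 + X $ 2 $ 2 * Y $ 2 $ 1) * v1 + (X $ 2 $ 1 * Y $ 1 $ 2 + X $ 2 $ 2 * Y $ 2 $ 2) * v2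
      = X $ 2 $ 1 * (Y $ 1 $ 1 * v1 + Y $ 1 $ 2 * v2) + X $ 2 $ 2 * (Y $ 2 $ 1 * v1 + Y $ 2 $ 2 * v2)"
    by (simp add: algebra_simps)
  also have "\<dots> = b * (X $ 2 $ 1 * v1 + X $ 2 $ 2 * v2)" by (simp only: h(3) h(4)) (simp add: algebra_simps)
  also have "\<dots> = a * b * v2" by (simp only: h(2)) (simp add: algebra_simps)
  finally show "(X $ 2 $ 1 * Y $ 1 $ 1 + X $ 2 $ 2 * Y $ 2 $ 1) * v1 + (X $ 2 $ 1 * Y $ 1 $ 2 + X $ 2 $ 2 * Y $ 2 $ 2) * v2 = a * b * v2" .
qed

lemma eig_I: "v1 \<noteq> 0 \<or> v2 \<noteq> 0 \<Longrightarrow> eig (mat 1) 1 v1 v2"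
  unfolding eig_def by (simp add: mat1e)

lemma eig_mpow: "eig X a v1 v2 \<Longrightarrow> eig (mpow X k) (a^k) v1 v2"
proof (induction k)
  case 0 then show ?case using eig_I[of v1 v2] by (simp add: eig_def)
next
  case (Suc k) then show ?case using eig_mult[of X a v1 v2 "mpow X k" "a^k"] by simp
qed

lemma eig_unique: "eig X a v1 v2 \<Longrightarrow> eig X b v1 v2 \<Longrightarrow> a = b"
  unfolding eig_def by (metis mult_cancel_right)

lemma eig_scalar: "X$1$2 = 0 \<Longrightarrow> X$2$1 = 0 \<Longrightarrow> X$1$1 = X$2$2 \<Longrightarrow> v1 \<noteq> 0 \<or> v2 \<noteq> 0 \<Longrightarrow> eig X (X$1$1) v1 v2"
  unfolding eig_def by auto

lemma ker_1dim:
  fixes n11 n12 n21 n22 v1 v2 w1 w2 :: complex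
  assumes "n11* v1 + n12* v2 = 0" "n21* v1 + n22* v2 = 0" "n11*w1 + n12*w2 = 0" "n21*w1 + n22*w2 = 0"
    "\<not> (n11 = 0 \<and> n12 = 0 \<and> n21 = 0 \<and> n22 = 0)"
  shows "v1 * w2 = v2 * w1"
proof (rule ccontr)
  assume D: "v1 * w2 \<noteq> v2 * w1"
  have "n11 * (v1*w2 - v2*w1) = w2 * (n11* v1 + n12* v2) - v2 * (n11*w1 + n12*w2)" by (simp add: algebra_simps)
  then have 1: "n11 = 0" using assms D by simp
  have "n12 * (v1*w2 - v2*w1) = v1 * (n11*w1 + n12*w2) - w1 * (n11* v1 + n12* v2)" by (simp add: algebra_simps)
  then have 2: "n12 = 0" using assms D by simp
  have "n21 * (v1*w2 - v2*w1) = w2 * (n21* v1 + n22* v2) - v2 * (n21*w1 + n22*w2)" by (simp add: algebra_simps)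
  then have 3: "n21 = 0" using assms D by simp
  have "n22 * (v1*w2 - v2*w1) = v1 * (n21*w1 + n22*w2) - w1 * (n21* v1 + n22* v2)" by (simp add: algebra_simps)
  then have 4: "n22 = 0" using assms D by simp
  show False using 1 2 3 4 assms(5) by simp
qed

definition scalar2 :: "mat2 \<Rightarrow> bool" where
  "scalar2 X \<longleftrightarrow> X$1$2 = 0 \<and> X$2$1 = 0 \<and> X$1$1 = X$2$2"

lemma eig_comm:
  assumes "\<not> scalar2 M" "eig M u v1 v2" "X ** M = M ** X"
  shows "\<exists>a. eig X a v1 v2"
proof -
  define w1 where "w1 = X$1$1* v1 + X$1$2* v2"
  define w2 where "w2 = X$2$1* v1 + X$2$2* v2"
  have c: "(X ** M)$i$j = (M ** X)$i$j" for i j using assms(3) by simp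
  have e: "M$1$1* v1 + M$1$2* v2 = u* v1" "M$2$1* v1 + M$2$2* v2 = u* v2" and nz: "v1 \<noteq> 0 \<or> v2 \<noteq> 0"
    using assms(2) unfolding eig_def by auto
  have w: "M$1$1*w1 + M$1$2*w2 = u*w1" "M$2$1*w1 + M$2$2*w2 = u*w2"
  proof -
    have "M$1$1*w1 + M$1$2*w2 = (M**X)$1$1 * v1 + (M**X)$1$2 * v2" unfolding w1_def w2_def mm by (simp add: algebra_simps)
    also have "\<dots> = (X**M)$1$1 * v1 + (X**M)$1$2 * v2" using c by simp
    also have "\<dots> = X$1$1 * (M$1$1* v1 + M$1$2* v2) + X$1$2 * (M$2$1* v1 + M$2$2* v2)" unfolding mm by (simp add: algebra_simps)
    also have "\<dots> = u*w1" using e unfolding w1_def by (simp add: algebra_simps)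
    finally show "M$1$1*w1 + M$1$2*w2 = u*w1" .
    have "M$2$1*w1 + M$2$2*w2 = (M**X)$2$1 * v1 + (M**X)$2$2 * v2" unfolding w1_def w2_def mm by (simp add: algebra_simps)
    also have "\<dots> = (X**M)$2$1 * v1 + (X**M)$2$2 * v2" using c by simp
    also have "\<dots> = X$2$1 * (M$1$1* v1 + M$1$2* v2) + X$2$2 * (M$2$1* v1 + M$2$2* v2)" unfolding mm by (simp add: algebra_simps)
    also have "\<dots> = u*w2" using e unfolding w2_def by (simp add: algebra_simps)
    finally show "M$2$1*w1 + M$2$2*w2 = u*w2" .
  qed
  have ns: "\<not> (M$1$1 - u = 0 \<and> M$1$2 = 0 \<and> M$2$1 = 0 \<and> M$2$2 - u = 0)" using assms(1) unfolding scalar2_def by auto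
  have k: "v1 * w2 = v2 * w1"
    by (rule ker_1dim[OF _ _ _ _ ns]) (use e w in \<open>simp_all add: algebra_simps\<close>)
  show ?thesis
  proof (cases "v1 = 0")
    case True
    then have "v2 \<noteq> 0" using nz by simp
    then have "eig X (w2 / v2) v1 v2" unfolding eig_def using True k
      by (auto simp: w1_def w2_def field_simps)
    then show ?thesis by blast
  next
    case False
    then have "eig X (w1 / v1) v1 v2" unfolding eig_def using k
      by (auto simp: w1_def w2_def field_simps)
    then show ?thesis by blast
  qed
qed

lemma mpow_comm: "A ** mpow A k = mpow A k ** A"
  by (induction k) (simp_all add: matrix_mul_assoc)

lemma powi_pow: "(x powi u) ^ n = (x::complex) powi (u * int n)"
  by (metis power_int_mult power_int_of_nat)

lemma bezout_root:
  fixes a b :: complex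
  assumes "coprime m n" "a \<noteq> 0" "b \<noteq> 0" "a ^ m = b ^ n"
  shows "\<exists>t. t \<noteq> 0 \<and> t ^ n = a \<and> t ^ m = b"
proof -
  obtain u v :: int where uv: "u * int m + v * int n = 1"
    using bezout_int[of "int m" "int n"] assms(1) by (metis coprime_int_iff gcd_int_int_eq coprime_iff_gcd_eq_1)
  define t where "t = power_int a v * power_int b u"
  have t0: "t \<noteq> 0" unfolding t_def using assms by simp
  have "t ^ n = a powi (v * int n) * b powi (u * int n)"
    unfolding t_def power_mult_distrib powi_pow ..
  also have "b powi (u * int n) = (b ^ n) powi u" by (metis powi_pow power_int_mult power_int_of_nat mult.commute)
  also have "\<dots> = a powi (u * int m)" using assms(4) by (metis powi_pow power_int_mult power_int_of_nat mult.commute)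
  also have "a powi (v * int n) * a powi (u * int m) = a powi (v * int n + u * int m)" using assms(2) by (simp add: power_int_add)
  also have "\<dots> = a" using uv by (simp add: algebra_simps)
  finally have 1: "t ^ n = a" .
  have "t ^ m = a powi (v * int m) * b powi (u * int m)"
    unfolding t_def power_mult_distrib powi_pow ..
  also have "a powi (v * int m) = (a ^ m) powi v" by (metis powi_pow power_int_mult power_int_of_nat mult.commute)
  also have "\<dots> = b powi (v * int n)" using assms(4) by (metis powi_pow power_int_mult power_int_of_nat mult.commute)
  also have "b powi (v * int n) * b powi (u * int m) = b powi (v * int n + u * int m)" using assms(3) by (simp add: power_int_add)
  also have "\<dots> = b" using uv by (simp add: algebra_simps)
  finally have 2: "t ^ m = b" .
  show ?thesis using t0 1 2 by blast
qed

lemma common_eig_Red: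
  assumes "coprime m n" "(A,B) \<in> reps m n" "eig A a v1 v2" "eig B b v1 v2"
  shows "tr3 A B \<in> RedS m n"
proof -
  have d: "det A = 1" "det B = 1" "mpow A m = mpow B n" using assms(2) unfolding reps_def by auto
  have a0: "a \<noteq> 0" and ta: "trace A = a + inverse a" using eig_det1[OF assms(3) d(1)] by auto
  have b0: "b \<noteq> 0" and tb: "trace B = b + inverse b" using eig_det1[OF assms(4) d(2)] by auto
  have "det (A ** B) = 1" using d by (simp add: det_mul)
  then have tab: "trace (A ** B) = a*b + inverse (a*b)" using eig_det1[OF eig_mult[OF assms(3,4)]] by auto
  have "eig (mpow A m) (a^m) v1 v2" using eig_mpow[OF assms(3)] by blast
  moreover have "eig (mpow A m) (b^n) v1 v2" using eig_mpow[OF assms(4), of n] d(3) by simp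
  ultimately have "a^m = b^n" by (rule eig_unique)
  then obtain t where t: "t \<noteq> 0" "t^n = a" "t^m = b" using bezout_root[OF assms(1) a0 b0] by blast
  have "tr3 A B = (tt n t, tt m t, tt (n+m) t)"
    unfolding tr3_def tt_def ta tb tab using t by (auto simp: power_add power_inverse mult.commute)
  then show ?thesis unfolding RedS_def using t(1) by blast
qed


fun ucoef :: "complex \<Rightarrow> nat \<Rightarrow> complex \<times> complex" where
  "ucoef x 0 = (1, 0)"
| "ucoef x (Suc k) = (- snd (ucoef x k), fst (ucoef x k) + x * snd (ucoef x k))"

lemma mpow_lin: assumes "det A = 1"
  shows "mpow A k = lin4 (fst (ucoef (trace A) k)) (snd (ucoef (trace A) k)) 0 0 A B"
proof (induction k)
  case 0 then show ?case by (simp add: mat2_eq lin4e mat1e)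
next
  case (Suc k) then show ?case using actA[OF assms] by simp
qed

lemma q_rec: "snd (ucoef x (Suc (Suc k))) = x * snd (ucoef x (Suc k)) - snd (ucoef x k)"
  by simp

lemma q_closed1:
  assumes "a \<noteq> 0" "x = a + inverse a"
  shows "snd (ucoef x k) * (a - inverse a) = a^k - inverse a ^ k \<and>
         snd (ucoef x (Suc k)) * (a - inverse a) = a^(Suc k) - inverse a ^ (Suc k)"
proof (induction k)
  case 0 then show ?case by simp
next
  case (Suc k)
  have ai: "a * inverse a = 1" using assms(1) by simp
  have "snd (ucoef x (Suc (Suc k))) * (a - inverse a)
      = (a + inverse a) * (snd (ucoef x (Suc k)) * (a - inverse a)) - snd (ucoef x k) * (a - inverse a)"
    unfolding q_rec assms(2) by (simp add: algebra_simps)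
  also have "\<dots> = (a + inverse a) * (a^(Suc k) - inverse a ^ (Suc k)) - (a^k - inverse a ^ k)" using Suc by simp
  also have "\<dots> = a^(Suc (Suc k)) - inverse a ^ (Suc (Suc k)) + (a * inverse a) * a^k - (a * inverse a) * (inverse a ^ k) - (a^k - inverse a ^ k)"
    by (simp add: algebra_simps)
  also have "\<dots> = a^(Suc (Suc k)) - inverse a ^ (Suc (Suc k))" using ai by simp
  finally show ?case using Suc by simp
qed

lemma q_closed2:
  assumes "a * a = 1" "x = 2 * a"
  shows "snd (ucoef x k) * a = of_nat k * a^k \<and> snd (ucoef x (Suc k)) * a = of_nat (Suc k) * a^(Suc k)"
proof (induction k)
  case 0 then show ?case using assms by simp
next
  case (Suc k)
  have "snd (ucoef x (Suc (Suc k))) * a = 2 * a * (snd (ucoef x (Suc k)) * a) - snd (ucoef x k) * a"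
    unfolding q_rec assms(2) by (simp add: algebra_simps)
  also have "\<dots> = 2 * a * (of_nat (Suc k) * a^(Suc k)) - of_nat k * a^k" using Suc by simp
  also have "\<dots> = 2 * of_nat (Suc k) * a^(Suc (Suc k)) - of_nat k * ((a * a) * a^k)" using assms(1) by (simp add: algebra_simps)
  also have "\<dots> = of_nat (Suc (Suc k)) * a^(Suc (Suc k))" using assms(1) by (simp add: algebra_simps)
  finally show ?case using Suc by simp
qed

definition lam :: "nat \<Rightarrow> nat \<Rightarrow> complex" where
  "lam k m = exp (pi * \<i> * of_nat k / of_nat m)"

lemma lam_cis: "lam k m = cis (pi * real k / real m)"
  unfolding lam_def cis_conv_exp by (simp add: field_simps)

lemma root_2m:
  assumes "a ^ (2*m) = 1" "a * a \<noteq> 1" "0 < m"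
  shows "\<exists>k. 0 < k \<and> k < m \<and> a + inverse a = lam k m + inverse (lam k m) \<and> a ^ m = (-1) ^ k"
proof -
  have "a \<in> {z. z ^ (2*m) = 1}" using assms by simp
  also have "{z. z ^ (2*m) = 1} = (\<lambda>k. cis (2 * pi * real k / real (2*m))) ` {..<2*m}"
  proof -
    have "0 < 2*m" using assms(3) by simp
    from bij_betw_imp_surj_on[OF Complex.bij_betw_roots_unity[OF this]] show ?thesis by (rule sym)
  qed
  finally obtain j where j: "j < 2*m" "a = cis (2 * pi * real j / real (2*m))" by blast
  have a: "a = cis (pi * real j / real m)" using j(2) by (simp add: field_simps)
  have am: "a ^ m = (-1) ^ j"
  proof -
    have "a^m = cis (real m * (pi*real j/real m))" unfolding a by (rule Complex.DeMoivre)
    also have "\<dots> = cis (real j * pi)" using assms(3) by (simp add: mult.commute)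
    also have "\<dots> = cis pi ^ j" by (rule Complex.DeMoivre[symmetric])
    also have "\<dots> = (-1)^j" by (simp add: cis_pi)
    finally show ?thesis .
  qed
  have "j \<noteq> 0"
  proof
    assume "j = 0"
    then have "a = 1" using a by simp
    then show False using assms(2) by simp
  qed
  moreover have "j \<noteq> m"
  proof
    assume "j = m"
    then have "a = -1" using a assms(3) by (simp add: cis_conv_exp)
    then show False using assms(2) by simp
  qed
  moreover have ainv: "inverse a = cis (- (pi * real j / real m))" using a by (simp add: cis_inverse)
  ultimately consider "0 < j" "j < m" | "m < j" "j < 2*m" using j(1) by linarith
  then show ?thesis
  proof cases
    case 1
    then show ?thesis using am by (intro exI[of _ j]) (simp add: lam_cis a)
  next
    case 2
    define k where "k = 2*m - j"
    have k: "0 < k" "k < m" using 2 unfolding k_def by auto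
    have r: "pi * real k / real m = 2*pi + (- (pi * real j / real m))"
      unfolding k_def using 2 assms(3) by (simp add: of_nat_diff field_simps)
    have "lam k m = cis (2*pi) * cis (- (pi * real j / real m))" unfolding lam_cis r cis_mult ..
    also have "\<dots> = inverse a" unfolding ainv by simp
    finally have l: "lam k m = inverse a" .
    have ev: "even k \<longleftrightarrow> even j" using 2 unfolding k_def by presburger
    have "(-1::complex) ^ k = (-1) ^ j"
    proof (cases "even j")
      case True then show ?thesis using ev by simp
    next
      case False then show ?thesis using ev by simp
    qed
    then show ?thesis using k l am by (intro exI[of _ k]) (auto simp: add.commute)
  qed
qed

lemma scalar_case:
  assumes "det A = 1" "\<not> scalar2 A" "0 < m" "scalar2 (mpow A m)"
  shows "\<exists>k. 0 < k \<and> k < m \<and> trace A = lam k m + inverse (lam k m) \<and> (mpow A m)$1$1 = (-1) ^ k"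
proof -
  obtain a v1 v2 where e: "eig A a v1 v2" using eig_exists by blast
  have a0: "a \<noteq> 0" and ta: "trace A = a + inverse a" using eig_det1[OF e assms(1)] by auto
  define q where "q = snd (ucoef (trace A) m)"
  have M: "mpow A m = lin4 (fst (ucoef (trace A) m)) q 0 0 A A" unfolding q_def by (rule mpow_lin[OF assms(1)])
  have q0: "q = 0"
  proof (rule ccontr)
    assume "q \<noteq> 0"
    then show False using assms(2,4) unfolding scalar2_def M lin4e mat1e by (auto simp: algebra_simps)
  qed
  have em: "eig (mpow A m) (a^m) v1 v2" by (rule eig_mpow[OF e])
  have "eig (mpow A m) ((mpow A m)$1$1) v1 v2"
    using assms(4) e unfolding scalar2_def eig_def by auto
  then have am: "(mpow A m)$1$1 = a^m" using eig_unique em by blast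
  have aa: "a * a \<noteq> 1"
  proof
    assume aa: "a * a = 1"
    then have "inverse a = a" using a0 by (metis inverse_unique)
    then have "trace A = 2 * a" using ta by simp
    then have "q * a = of_nat m * a^m" using q_closed2[OF aa] unfolding q_def by blast
    then show False using q0 a0 assms(3) by simp
  qed
  have "q * (a - inverse a) = a^m - inverse a ^ m" using q_closed1[OF a0 ta] unfolding q_def by blast
  then have "a^m = inverse a ^ m" using q0 by simp
  then have "a^m * a^m = 1" using a0 by (simp add: power_inverse[symmetric] field_simps)
  then have "a ^ (2*m) = 1" by (simp add: power_mult[symmetric] power_add[symmetric] mult_2)
  then obtain k where "0 < k" "k < m" "a + inverse a = lam k m + inverse (lam k m)" "a ^ m = (-1) ^ k"
    using root_2m aa assms(3) by blast
  then show ?thesis using ta am by (intro exI[of _ k]) auto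
qed

definition LineK :: "nat \<Rightarrow> nat \<Rightarrow> nat \<times> nat \<Rightarrow> pt3 set" where
  "LineK m n kk = LineS (lam (fst kk) m + inverse (lam (fst kk) m)) (lam (snd kk) n + inverse (lam (snd kk) n))"

lemma reps_class:
  assumes "coprime m n" "0 < m" "0 < n" "(A,B) \<in> reps m n"
  shows "tr3 A B \<in> RedS m n \<union> (\<Union>kk\<in>irr_index m n. LineK m n kk)"
proof -
  have d: "det A = 1" "det B = 1" "mpow A m = mpow B n" using assms(4) unfolding reps_def by auto
  show ?thesis
  proof (cases "scalar2 (mpow A m)")
    case False
    obtain u v1 v2 where e: "eig (mpow A m) u v1 v2" using eig_exists by blast
    obtain a where a: "eig A a v1 v2" using eig_comm[OF False e mpow_comm] by blast
    have "B ** mpow A m = mpow A m ** B" unfolding d(3) by (rule mpow_comm)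
    then obtain b where b: "eig B b v1 v2" using eig_comm[OF False e] by blast
    show ?thesis using common_eig_Red[OF assms(1,4) a b] by blast
  next
    case Msc: True
    show ?thesis
    proof (cases "scalar2 A")
      case True
      obtain b v1 v2 where b: "eig B b v1 v2" using eig_exists by blast
      have "eig A (A$1$1) v1 v2" using True b unfolding scalar2_def eig_def by auto
      then show ?thesis using common_eig_Red[OF assms(1,4) _ b] by blast
    next
      case nA: False
      show ?thesis
      proof (cases "scalar2 B")
        case True
        obtain a v1 v2 where a: "eig A a v1 v2" using eig_exists by blast
        have "eig B (B$1$1) v1 v2" using True a unfolding scalar2_def eig_def by auto
        then show ?thesis using common_eig_Red[OF assms(1,4) a] by blast
      next
        case nB: False
        obtain k where k: "0 < k" "k < m" "trace A = lam k m + inverse (lam k m)" "(mpow A m)$1$1 = (-1) ^ k"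
          using scalar_case[OF d(1) nA assms(2) Msc] by blast
        have MscB: "scalar2 (mpow B n)" using Msc d(3) by simp
        obtain k' where k': "0 < k'" "k' < n" "trace B = lam k' n + inverse (lam k' n)" "(mpow B n)$1$1 = (-1) ^ k'"
          using scalar_case[OF d(2) nB assms(3) MscB] by blast
        have pm: "(-1::complex) ^ k = (-1) ^ k'" using k(4) k'(4) d(3) by simp
        have "k mod 2 = k' mod 2"
        proof (rule ccontr)
          assume "k mod 2 \<noteq> k' mod 2"
          then have "even k \<and> odd k' \<or> odd k \<and> even k'" by presburger
          then show False using pm by auto
        qed
        then have kk: "(k, k') \<in> irr_index m n" unfolding irr_index_def using k k' by simp
        have "tr3 A B \<in> LineK m n (k, k')" unfolding LineK_def LineS_def tr3_def using k(3) k'(3) by simp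
        then show ?thesis using kk by blast
      qed
    qed
  qed
qed


lemma Psi_chi: "Psi (chi A B) = tr3 A B"
  by (simp add: Psi_def chi_def tr3_def)

lemma diagm_e: "diagm l $1$1 = l" "diagm l $2$2 = inverse l" "diagm l $1$2 = 0" "diagm l $2$1 = 0"
  by (simp_all add: diagm_def)

lemma Pmat_e: "Pmat r $1$1 = 1" "Pmat r $1$2 = r - 1" "Pmat r $2$1 = 1" "Pmat r $2$2 = r"
  by (simp_all add: Pmat_def)

definition Pinv :: "complex \<Rightarrow> mat2" where
  "Pinv r = (\<chi> i j. if i = 1 then (if j = 1 then r else 1 - r) else (if j = 1 then -1 else 1))"

lemma Pinv_e: "Pinv r $1$1 = r" "Pinv r $1$2 = 1 - r" "Pinv r $2$1 = -1" "Pinv r $2$2 = 1"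
  by (simp_all add: Pinv_def)

lemma Pmat_inv: "matrix_inv (Pmat r) = Pinv r"
  by (rule matrix_inv_eqI) (auto simp: mat2_eq mm Pmat_e Pinv_e mat1e algebra_simps)

lemma det_diagm: "l \<noteq> 0 \<Longrightarrow> det (diagm l) = 1"
  by (simp add: det_2 diagm_e)

lemma mpow_diagm: "mpow (diagm l) k = diagm (l ^ k)"
proof (induction k)
  case 0 then show ?case by (simp add: mat2_eq diagm_e mat1e)
next
  case (Suc k) then show ?case by (simp add: mat2_eq mm diagm_e power_inverse)
qed

lemma tr3_diag: "tr3 (diagm a) (diagm b) = (a + inverse a, b + inverse b, a*b + inverse (a*b))"
  by (simp add: tr3_def tr2 mm diagm_e)

lemma img_col: "f ` {g t |t. P t} = {f (g t) |t. P t}" by blast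

lemma Red_eq: "Psi ` Xred m n = RedS m n"
proof -
  have "Psi ` Xred m n = {tr3 (diagm (t ^ n)) (diagm (t ^ m)) | t. t \<noteq> 0}"
    unfolding Xred_def img_col Psi_chi ..
  also have "\<dots> = RedS m n"
    unfolding RedS_def tr3_diag tt_def by (simp add: power_inverse power_add mult.commute)
  finally show ?thesis .
qed

lemma Xred_sub: "Xred m n \<subseteq> charvar m n"
proof
  fix ch assume "ch \<in> Xred m n"
  then obtain t where t: "t \<noteq> 0" "ch = chi (diagm (t ^ n)) (diagm (t ^ m))" unfolding Xred_def by blast
  have "(diagm (t ^ n), diagm (t ^ m)) \<in> reps m n"
    unfolding reps_def using t(1) by (simp add: det_diagm mpow_diagm power_mult[symmetric] mult.commute)
  then show "ch \<in> charvar m n" unfolding charvar_def using t(2) by force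
qed

lemma lam_pow: "0 < m \<Longrightarrow> lam k m ^ m = (-1) ^ k"
proof -
  assume m: "0 < m"
  have "lam k m ^ m = cis (real m * (pi * real k / real m))" unfolding lam_cis by (rule Complex.DeMoivre)
  also have "\<dots> = cis (real k * pi)" using m by (simp add: mult.commute)
  also have "\<dots> = cis pi ^ k" by (rule Complex.DeMoivre[symmetric])
  also have "\<dots> = (-1)^k" by simp
  finally show ?thesis .
qed

lemma lam_nz: "lam k m \<noteq> 0" by (simp add: lam_def)

lemma lam_sq: assumes "0 < k" "k < m" shows "lam k m * lam k m \<noteq> 1"
proof
  assume h: "lam k m * lam k m = 1"
  have "lam k m * lam k m = cis (2 * pi * real k / real m)" unfolding lam_cis cis_mult by (simp add: field_simps)
  moreover have "(1::complex) = cis (2 * pi * real 0 / real m)" by simp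
  ultimately have "cis (2 * pi * real k / real m) = cis (2 * pi * real 0 / real m)" using h by simp
  moreover have "inj_on (\<lambda>k. cis (2 * pi * real k / real m)) {..<m}"
    using Complex.bij_betw_roots_unity[of m] assms unfolding bij_betw_def by simp
  ultimately have "k = 0" using assms unfolding inj_on_def by (metis lessThan_iff less_trans)
  then show False using assms by simp
qed

lemma lam_ne_inv: assumes "0 < k" "k < m" shows "lam k m - inverse (lam k m) \<noteq> 0"
proof
  assume "lam k m - inverse (lam k m) = 0"
  then have "lam k m * lam k m = 1" using lam_nz[of k m] by (simp add: field_simps)
  then show False using lam_sq[OF assms] by simp
qed

lemma conj_scalar: assumes "c * c = 1" "P ** Q = mat 1" shows "P ** diagm c ** Q = diagm c"
proof -
  have "inverse c = c" using assms(1) by (metis inverse_unique)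
  then have "P ** diagm c = diagm c ** P" by (simp add: mat2_eq mm diagm_e mult.commute)
  then show ?thesis using assms(2) by (metis matrix_mul_assoc matrix_mul_rid)
qed

lemma mpow_conj: assumes "Q ** P = mat 1" "P ** Q = mat 1" shows "mpow (P ** D ** Q) k = P ** mpow D k ** Q"
proof (induction k)
  case 0
  then show ?case using assms(2) by simp
next
  case (Suc k)
  have "mpow (P ** D ** Q) (Suc k) = P ** D ** (Q ** P) ** mpow D k ** Q" using Suc by (simp add: matrix_mul_assoc)
  then show ?case using assms by (simp add: matrix_mul_assoc)
qed


lemma tr_irr: "trace (diagm l ** (Pmat r ** diagm u ** Pinv r)) = r*(l - inverse l)*(u - inverse u) + l * inverse u + inverse l * u"
  by (simp add: tr2 mm diagm_e Pmat_e Pinv_e algebra_simps)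

lemma det_Pmat: "det (Pmat r) = 1" by (simp add: det_2 Pmat_e)
lemma det_Pinv: "det (Pinv r) = 1" by (simp add: det_2 Pinv_e)
lemma Pinv_Pmat: "Pinv r ** Pmat r = mat 1" "Pmat r ** Pinv r = mat 1"
  by (auto simp: mat2_eq mm Pmat_e Pinv_e mat1e algebra_simps)

lemma Xirr_alt: "Xirr_line m n k k' = {chi (diagm (lam k m)) (Pmat r ** diagm (lam k' n) ** Pinv r) | r. True}"
  unfolding Xirr_line_def lam_def Pmat_inv ..

lemma Xirr_eq:
  assumes "(k,k') \<in> irr_index m n"
  shows "Psi ` Xirr_line m n k k' = LineK m n (k,k')"
proof -
  have k: "0 < k" "k < m" "0 < k'" "k' < n" using assms unfolding irr_index_def by auto
  define l where "l = lam k m"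
  define u where "u = lam k' n"
  have nz: "(l - inverse l) * (u - inverse u) \<noteq> 0" unfolding l_def u_def using lam_ne_inv k by simp
  have "Psi ` Xirr_line m n k k' = {tr3 (diagm l) (Pmat r ** diagm u ** Pinv r) | r. True}"
    unfolding Xirr_alt img_col Psi_chi l_def u_def ..
  also have "\<dots> = {(l + inverse l, u + inverse u, r*(l - inverse l)*(u - inverse u) + l * inverse u + inverse l * u) | r. True}"
  proof -
    have "tr3 (diagm l) (Pmat r ** diagm u ** Pinv r) = (l + inverse l, u + inverse u, r*(l - inverse l)*(u - inverse u) + l * inverse u + inverse l * u)" for r
    proof -
      have "trace (Pmat r ** diagm u ** Pinv r) = u + inverse u"
        by (simp add: tr2 mm diagm_e Pmat_e Pinv_e algebra_simps)
      then show ?thesis unfolding tr3_def tr_irr by (simp add: tr2 diagm_e)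
    qed
    then show ?thesis by simp
  qed
  also have "\<dots> = LineK m n (k,k')"
  proof (rule set_eqI, rule iffI)
    fix p assume "p \<in> {(l + inverse l, u + inverse u, r*(l - inverse l)*(u - inverse u) + l * inverse u + inverse l * u) | r. True}"
    then show "p \<in> LineK m n (k,k')" unfolding LineK_def LineS_def l_def u_def by auto
  next
    fix p assume "p \<in> LineK m n (k,k')"
    then obtain z where p: "p = (l + inverse l, u + inverse u, z)" unfolding LineK_def LineS_def l_def u_def by auto
    define r where "r = (z - l * inverse u - inverse l * u) / ((l - inverse l) * (u - inverse u))"
    have "r*(l - inverse l)*(u - inverse u) + l * inverse u + inverse l * u = z"
      unfolding r_def using nz by (simp add: field_simps)
    then show "p \<in> {(l + inverse l, u + inverse u, r*(l - inverse l)*(u - inverse u) + l * inverse u + inverse l * u) | r. True}"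
      unfolding p by (intro CollectI exI[of _ r]) simp
  qed
  finally show ?thesis .
qed

lemma Xirr_sub:
  assumes "(k,k') \<in> irr_index m n"
  shows "Xirr_line m n k k' \<subseteq> charvar m n"
proof
  have k: "0 < k" "k < m" "0 < k'" "k' < n" "k mod 2 = k' mod 2" using assms unfolding irr_index_def by auto
  have pm: "(-1::complex) ^ k = (-1) ^ k'"
  proof (cases "even k")
    case True then have "even k'" using k(5) by presburger
    then show ?thesis using True by simp
  next
    case False then have "odd k'" using k(5) by presburger
    then show ?thesis using False by simp
  qed
  fix ch assume "ch \<in> Xirr_line m n k k'"
  then obtain r where ch: "ch = chi (diagm (lam k m)) (Pmat r ** diagm (lam k' n) ** Pinv r)" unfolding Xirr_alt by blast
  have cc: "(-1::complex) ^ k' * (-1) ^ k' = 1" by (simp add: power_add[symmetric] power_mult_distrib[symmetric])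
  have "mpow (diagm (lam k m)) m = diagm ((-1) ^ k')" unfolding mpow_diagm lam_pow[OF order.strict_trans1[OF _ k(2)], OF le0] pm ..
  moreover have "mpow (Pmat r ** diagm (lam k' n) ** Pinv r) n = diagm ((-1) ^ k')"
    unfolding mpow_conj[OF Pinv_Pmat] mpow_diagm lam_pow[OF order.strict_trans1[OF _ k(4)], OF le0]
    by (rule conj_scalar[OF cc Pinv_Pmat(2)])
  moreover have "det (diagm (lam k m)) = 1" by (rule det_diagm[OF lam_nz])
  moreover have "det (Pmat r ** diagm (lam k' n) ** Pinv r) = 1" by (simp add: det_mul det_Pmat det_Pinv det_diagm lam_nz)
  ultimately have "(diagm (lam k m), Pmat r ** diagm (lam k' n) ** Pinv r) \<in> reps m n" unfolding reps_def by simp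
  then show "ch \<in> charvar m n" unfolding charvar_def ch by force
qed

lemma C_eq:
  assumes "coprime m n" "0 < m" "0 < n"
  shows "Psi ` charvar m n = RedS m n \<union> (\<Union>kk\<in>irr_index m n. LineK m n kk)"
proof (rule set_eqI, rule iffI)
  fix p assume "p \<in> Psi ` charvar m n"
  then obtain A B where "(A,B) \<in> reps m n" "p = Psi (chi A B)" unfolding charvar_def by auto
  then show "p \<in> RedS m n \<union> (\<Union>kk\<in>irr_index m n. LineK m n kk)" using reps_class[OF assms] Psi_chi by simp
next
  fix p assume "p \<in> RedS m n \<union> (\<Union>kk\<in>irr_index m n. LineK m n kk)"
  then consider "p \<in> RedS m n" | kk where "kk \<in> irr_index m n" "p \<in> LineK m n kk" by blast
  then show "p \<in> Psi ` charvar m n"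
  proof cases
    case 1 then show ?thesis using Red_eq Xred_sub by blast
  next
    case 2
    obtain k k' where kk: "kk = (k,k')" by (cases kk) auto
    show ?thesis using 2 Xirr_eq[of k k' m n] Xirr_sub[of k k' m n] unfolding kk by blast
  qed
qed


lemma ring_aux:
  fixes t i T I K :: complex
  assumes "t * i = 1"
  shows "(t*T + i*I)*(t - i) + (t + i)*((K+1)*(t*T - i*I)) - K*(T - I) = (K+2)*(t*t*T - i*i*I)"
proof -
  have "(t*T + i*I)*(t - i) + (t + i)*((K+1)*(t*T - i*I)) - K*(T - I)
      = (K+2)*(t*t*T - i*i*I) + (t*i) * ((K+1)*T - (K+1)*I - T + I) - K*T + K*I"
    by (simp add: algebra_simps)
  then show ?thesis using assms by (simp add: algebra_simps)
qed

lemma cheb_deriv: "t \<noteq> 0 \<Longrightarrow> poly (pderiv (cheb k)) (t + inverse t) * (t - inverse t) = of_nat k * (t^k - inverse t ^ k)"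
proof (induction k rule: cheb.induct)
  case 1 then show ?case by (simp add: pderiv_pCons)
next
  case 2 then show ?case by (simp add: pderiv_pCons)
next
  case (3 k)
  let ?s = "t + inverse t" and ?w = "t - inverse t"
  have ti: "t * inverse t = 1" using 3 by simp
  have "poly (pderiv (cheb (Suc (Suc k)))) ?s * ?w
     = poly (cheb (Suc k)) ?s * ?w + ?s * (poly (pderiv (cheb (Suc k))) ?s * ?w) - poly (pderiv (cheb k)) ?s * ?w"
    by (simp add: pderiv_mult pderiv_diff pderiv_pCons algebra_simps)
  also have "\<dots> = poly (cheb (Suc k)) ?s * ?w + ?s * (of_nat (Suc k) * (t ^ Suc k - inverse t ^ Suc k)) - of_nat k * (t^k - inverse t ^ k)"
  proof -
    have IH1: "poly (pderiv (cheb (Suc k))) ?s * ?w = of_nat (Suc k) * (t ^ Suc k - inverse t ^ Suc k)"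
      by (rule 3(1)[OF 3(3)])
    have IH0: "poly (pderiv (cheb k)) ?s * ?w = of_nat k * (t ^ k - inverse t ^ k)"
      by (rule 3(2)[OF 3(3)])
    show ?thesis by (simp only: IH1 IH0)
  qed
  also have "\<dots> = (t * t^k + inverse t * inverse t ^ k) * (t - inverse t)
       + (t + inverse t) * ((of_nat k + 1) * (t * t^k - inverse t * inverse t ^ k)) - of_nat k * (t^k - inverse t ^ k)"
    using 3 by (simp add: cheb_eval)
  also have "\<dots> = (of_nat k + 2) * (t * t * t^k - inverse t * inverse t * inverse t ^ k)"
    by (rule ring_aux[OF ti])
  also have "\<dots> = of_nat (Suc (Suc k)) * (t ^ Suc (Suc k) - inverse t ^ Suc (Suc k))"
    by (simp add: algebra_simps)
  finally show ?case .
qed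

definition cc :: "nat \<Rightarrow> nat \<Rightarrow> complex" where
  "cc k m = lam k m + inverse (lam k m)"

lemma cc_cos: "cc k m = of_real (2 * cos (pi * real k / real m))"
  unfolding cc_def lam_cis by (simp add: cis_inverse cos_of_real complex_eq_iff)

lemma cc_inj: assumes "0 < m" "k \<le> m" "j \<le> m" "cc k m = cc j m" shows "k = j"
proof -
  have "cos (pi * real k / real m) = cos (pi * real j / real m)" using assms(4) unfolding cc_cos by simp
  moreover have "0 \<le> pi * real k / real m" "pi * real k / real m \<le> pi" "0 \<le> pi * real j / real m" "pi * real j / real m \<le> pi"
    using assms(1,2,3) by (auto simp: field_simps)
  ultimately have "pi * real k / real m = pi * real j / real m" using cos_inj_pi by blast
  then show ?thesis using assms(1) by simp
qed

lemma cc0: "cc 0 m = 2" by (simp add: cc_def lam_def)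

lemma LineK_cc: "LineK m n kk = LineS (cc (fst kk) m) (cc (snd kk) n)"
  unfolding LineK_def cc_def ..

lemma LineK_disj:
  assumes "0 < m" "0 < n" "a \<in> irr_index m n" "b \<in> irr_index m n" "a \<noteq> b"
  shows "LineK m n a \<inter> LineK m n b = {}"
proof (rule ccontr)
  assume "LineK m n a \<inter> LineK m n b \<noteq> {}"
  then have "cc (fst a) m = cc (fst b) m" "cc (snd a) n = cc (snd b) n" unfolding LineK_cc LineS_def by auto
  then have "fst a = fst b" "snd a = snd b"
    using cc_inj[of m "fst a" "fst b"] cc_inj[of n "snd a" "snd b"] assms unfolding irr_index_def by (auto simp: case_prod_beta)
  then show False using assms(5) by (simp add: prod_eq_iff)
qed

lemma Red_not_Line:
  assumes "0 < m" "a \<in> irr_index m n" shows "\<not> RedS m n \<subseteq> LineK m n a"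
proof
  assume "RedS m n \<subseteq> LineK m n a"
  moreover have "(2,2,2) \<in> RedS m n" unfolding RedS_def tt_def by (intro CollectI exI[of _ 1]) simp
  ultimately have "cc (fst a) m = 2" unfolding LineK_cc LineS_def by auto
  then have "fst a = 0" using cc_inj[of m "fst a" 0] cc0 assms unfolding irr_index_def by (auto simp: case_prod_beta)
  then show False using assms unfolding irr_index_def by (auto simp: case_prod_beta)
qed

lemma uinv:
  fixes a l :: complex
  assumes "a \<noteq> 0" "l \<noteq> 0" "a + inverse a = l + inverse l"
  shows "a = l \<or> a = inverse l"
proof -
  have "(a - l) * (a - inverse l) = a * (a + inverse a - (l + inverse l))"
    using assms(1,2) by (simp add: field_simps)
  then have "(a - l) * (a - inverse l) = 0" using assms(3) by simp
  then show ?thesis by simp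
qed


lemma parity_pm: "k mod 2 = k' mod 2 \<Longrightarrow> (-1::complex) ^ k = (-1) ^ k'"
proof (cases "even k")
  case True
  assume h: "k mod 2 = k' mod 2"
  then have "even k'" using True by presburger
  then show ?thesis using True by simp
next
  case False
  assume h: "k mod 2 = k' mod 2"
  then have "odd k'" using False by presburger
  then show ?thesis using False by simp
qed

lemma inv_pm: "inverse ((-1::complex) ^ k) = (-1) ^ k"
  by (cases "even k") simp_all

lemma tt_pt:
  assumes "t \<noteq> 0" "t ^ n = a" "t ^ m = b"
  shows "(tt n t, tt m t, tt (n+m) t) = (a + inverse a, b + inverse b, a*b + inverse (a*b))"
  using assms by (simp add: tt_def power_add power_inverse)

lemma inter_LR:
  assumes "coprime m n" "0 < m" "0 < n" "(k,k') \<in> irr_index m n"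
  shows "LineK m n (k,k') \<inter> RedS m n =
           {(cc k m, cc k' n, lam k m * lam k' n + inverse (lam k m * lam k' n)),
            (cc k m, cc k' n, lam k m * inverse (lam k' n) + inverse (lam k m * inverse (lam k' n)))}"
    and "lam k m * lam k' n + inverse (lam k m * lam k' n) \<noteq> lam k m * inverse (lam k' n) + inverse (lam k m * inverse (lam k' n))"
    and "\<forall>p \<in> LineK m n (k,k') \<inter> RedS m n. \<exists>t. t \<noteq> 0 \<and> t^n = lam k m \<and> p = pc_eval (phiR m n) (t + inverse t)"
proof -
  have kk: "0 < k" "k < m" "0 < k'" "k' < n" "k mod 2 = k' mod 2" using assms(4) unfolding irr_index_def by auto
  define l where "l = lam k m"
  define u where "u = lam k' n"
  define z1 where "z1 = l * u + inverse (l * u)"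
  define z2 where "z2 = l * inverse u + inverse (l * inverse u)"
  have l0: "l \<noteq> 0" and u0: "u \<noteq> 0" unfolding l_def u_def by (simp_all add: lam_nz)
  have lm: "l ^ m = (-1) ^ k" unfolding l_def using lam_pow kk by simp
  have un: "u ^ n = (-1) ^ k'" unfolding u_def using lam_pow kk by simp
  have pm: "(-1::complex) ^ k = (-1) ^ k'" by (rule parity_pm[OF kk(5)])
  obtain t1 where t1: "t1 \<noteq> 0" "t1 ^ n = l" "t1 ^ m = u"
    using bezout_root[OF assms(1) l0 u0] lm un pm by auto
  obtain t2 where t2: "t2 \<noteq> 0" "t2 ^ n = l" "t2 ^ m = inverse u"
    using bezout_root[OF assms(1) l0, of "inverse u"] lm un pm u0 by (auto simp: power_inverse inv_pm)
  have P1: "(tt n t1, tt m t1, tt (n+m) t1) = (cc k m, cc k' n, z1)"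
    unfolding tt_pt[OF t1] cc_def l_def u_def z1_def ..
  have P2: "(tt n t2, tt m t2, tt (n+m) t2) = (cc k m, cc k' n, z2)"
    unfolding tt_pt[OF t2] cc_def l_def u_def z2_def by (simp add: add.commute)
  have LR: "LineK m n (k,k') \<inter> RedS m n = {(cc k m, cc k' n, z1), (cc k m, cc k' n, z2)}"
  proof (rule set_eqI, rule iffI)
    fix p assume p: "p \<in> LineK m n (k,k') \<inter> RedS m n"
    then obtain t where t: "t \<noteq> 0" "p = (tt n t, tt m t, tt (n+m) t)" unfolding RedS_def by blast
    have a0: "t^n \<noteq> 0" "t^m \<noteq> 0" using t(1) by simp_all
    have "tt n t = cc k m" "tt m t = cc k' n" using p t(2) unfolding LineK_cc LineS_def by auto
    then have e: "t^n + inverse (t^n) = l + inverse l" "t^m + inverse (t^m) = u + inverse u"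
      unfolding tt_def cc_def l_def u_def by (simp_all add: power_inverse)
    have A: "t^n = l \<or> t^n = inverse l" by (rule uinv[OF a0(1) l0 e(1)])
    have B: "t^m = u \<or> t^m = inverse u" by (rule uinv[OF a0(2) u0 e(2)])
    have tz: "tt (n+m) t = t^n * t^m + inverse (t^n * t^m)" by (simp add: tt_def power_add power_inverse)
    have "tt (n+m) t = z1 \<or> tt (n+m) t = z2"
    proof -
      consider "t^n = l" "t^m = u" | "t^n = l" "t^m = inverse u" | "t^n = inverse l" "t^m = u" | "t^n = inverse l" "t^m = inverse u"
        using A B by blast
      then show ?thesis
      proof cases
        case 1 then show ?thesis unfolding tz z1_def by simp
      next
        case 2 then show ?thesis unfolding tz z2_def by simp
      next
        case 3 then show ?thesis unfolding tz z2_def by (simp add: inverse_mult_distrib ac_simps)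
      next
        case 4 then show ?thesis unfolding tz z1_def by (simp add: inverse_mult_distrib ac_simps)
      qed
    qed
    moreover have "tt n t = cc k m" "tt m t = cc k' n" by fact+
    ultimately show "p \<in> {(cc k m, cc k' n, z1), (cc k m, cc k' n, z2)}" using t(2) by auto
  next
    fix p assume "p \<in> {(cc k m, cc k' n, z1), (cc k m, cc k' n, z2)}"
    then have pp: "p = (tt n t1, tt m t1, tt (n+m) t1) \<or> p = (tt n t2, tt m t2, tt (n+m) t2)" unfolding P1 P2 by simp
    have "p \<in> LineK m n (k,k')" using \<open>p \<in> _\<close> unfolding LineK_cc LineS_def by auto
    moreover have "p \<in> RedS m n"
      using pp
    proof
      assume "p = (tt n t1, tt m t1, tt (n+m) t1)"
      then show ?thesis unfolding RedS_def using t1(1) by blast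
    next
      assume "p = (tt n t2, tt m t2, tt (n+m) t2)"
      then show ?thesis unfolding RedS_def using t2(1) by blast
    qed
    ultimately show "p \<in> LineK m n (k,k') \<inter> RedS m n" by blast
  qed
  show "LineK m n (k,k') \<inter> RedS m n =
           {(cc k m, cc k' n, lam k m * lam k' n + inverse (lam k m * lam k' n)),
            (cc k m, cc k' n, lam k m * inverse (lam k' n) + inverse (lam k m * inverse (lam k' n)))}"
    using LR unfolding z1_def z2_def l_def u_def .
  have "z1 - z2 = (l - inverse l) * (u - inverse u)"
    unfolding z1_def z2_def using l0 u0 by (simp add: field_simps)
  moreover have "(l - inverse l) * (u - inverse u) \<noteq> 0" unfolding l_def u_def using lam_ne_inv kk by simp
  ultimately have "z1 - z2 \<noteq> 0" by simp
  then have "z1 \<noteq> z2" by simp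
  then show "lam k m * lam k' n + inverse (lam k m * lam k' n) \<noteq> lam k m * inverse (lam k' n) + inverse (lam k m * inverse (lam k' n))"
    unfolding z1_def z2_def l_def u_def .
  show "\<forall>p \<in> LineK m n (k,k') \<inter> RedS m n. \<exists>t. t \<noteq> 0 \<and> t^n = lam k m \<and> p = pc_eval (phiR m n) (t + inverse t)"
  proof
    fix p assume "p \<in> LineK m n (k,k') \<inter> RedS m n"
    then have "p = (tt n t1, tt m t1, tt (n+m) t1) \<or> p = (tt n t2, tt m t2, tt (n+m) t2)" unfolding LR P1 P2 by simp
    then show "\<exists>t. t \<noteq> 0 \<and> t^n = lam k m \<and> p = pc_eval (phiR m n) (t + inverse t)"
    proof
      assume "p = (tt n t1, tt m t1, tt (n+m) t1)"
      then have "p = pc_eval (phiR m n) (t1 + inverse t1)" using phiR_eval[OF t1(1)] by simp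
      then show ?thesis using t1 unfolding l_def by blast
    next
      assume "p = (tt n t2, tt m t2, tt (n+m) t2)"
      then have "p = pc_eval (phiR m n) (t2 + inverse t2)" using phiR_eval[OF t2(1)] by simp
      then show ?thesis using t2 unfolding l_def by blast
    qed
  qed
qed

lemma transversal_LR:
  assumes "coprime m n" "0 < m" "0 < n" "(k,k') \<in> irr_index m n" "p \<in> LineK m n (k,k') \<inter> RedS m n"
  shows "transversal_at (LineK m n (k,k')) (RedS m n) p"
proof -
  have kk: "0 < k" "k < m" using assms(4) unfolding irr_index_def by auto
  obtain t where t: "t \<noteq> 0" "t^n = lam k m" "p = pc_eval (phiR m n) (t + inverse t)"
    using inter_LR(3)[OF assms(1-4)] assms(5) by blast
  obtain z where z: "p = (cc k m, cc k' n, z)" using assms(5) unfolding LineK_cc LineS_def by auto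
  have D: "poly (pderiv (cheb n)) (t + inverse t) \<noteq> 0"
  proof
    assume h: "poly (pderiv (cheb n)) (t + inverse t) = 0"
    have "of_nat n * (t^n - inverse t ^ n) = 0" using cheb_deriv[OF t(1), of n] h by simp
    then have "lam k m - inverse (lam k m) = 0" using assms(3) t(2) by (simp add: power_inverse)
    then show False using lam_ne_inv kk by simp
  qed
  show ?thesis unfolding transversal_at_def
  proof (intro exI conjI)
    show "iso_to_line (phiL (cc k m) (cc k' n)) (LineK m n (k,k'))" unfolding LineK_cc by (simp add: iso_phiL)
    show "iso_to_line (phiR m n) (RedS m n)" by (rule iso_phiR[OF assms(1-3)])
    show "pc_eval (phiL (cc k m) (cc k' n)) z = p" unfolding z by (simp add: pc_eval_def phiL_def)
    show "pc_eval (phiR m n) (t + inverse t) = p" using t(3) by simp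
    show "lin_indep2 (pc_deriv (phiL (cc k m) (cc k' n)) z) (pc_deriv (phiR m n) (t + inverse t))"
      unfolding lin_indep2_def pc_deriv_phiL using D by (auto simp: pc_deriv_def phiR_def)
  qed
qed

lemma modeq: "(a::nat) mod 2 = b mod 2 \<longleftrightarrow> (even a \<longleftrightarrow> even b)"
  by (cases "even a"; cases "even b") (simp_all add: even_iff_mod_2_eq_zero odd_iff_mod_2_eq_one)
lemma par1: "odd (m::nat) \<Longrightarrow> k < m \<Longrightarrow> ((m - k) mod 2 = k' mod 2) \<longleftrightarrow> (k mod 2 \<noteq> k' mod 2)"
  unfolding modeq by (auto simp: even_diff_nat)
lemma par2: "odd (n::nat) \<Longrightarrow> k' < n \<Longrightarrow> (k mod 2 = (n - k') mod 2) \<longleftrightarrow> (k mod 2 \<noteq> k' mod 2)"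
  unfolding modeq by (auto simp: even_diff_nat)

lemma card_irr:
  assumes "coprime m n" "0 < m" "0 < n"
  shows "2 * card (irr_index m n) = (m - 1) * (n - 1)"
proof -
  define J where "J = {(k, k'). 0 < k \<and> k < m \<and> 0 < k' \<and> k' < n \<and> k mod 2 \<noteq> k' mod 2}"
  define R where "R = {0<..<m} \<times> {0<..<n}"
  have fin: "finite (irr_index m n)" "finite J"
    by (rule finite_subset[of _ R], auto simp: R_def irr_index_def J_def)+
  have U: "irr_index m n \<union> J = R" "irr_index m n \<inter> J = {}" unfolding R_def irr_index_def J_def by auto
  have cR: "card R = (m - 1) * (n - 1)" unfolding R_def by (simp add: card_cartesian_product)
  have cIJ: "card (irr_index m n) = card J"
  proof (cases "odd m")
    case True
    have "bij_betw (\<lambda>(k,k'). (m - k, k')) (irr_index m n) J"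
    proof (rule bij_betw_byWitness[where f'="\<lambda>(k,k'). (m - k, k')"])
      show "\<forall>a\<in>irr_index m n. (case (case a of (k, k') \<Rightarrow> (m - k, k')) of (k, k') \<Rightarrow> (m - k, k')) = a"
        by (auto simp: irr_index_def)
      show "\<forall>a\<in>J. (case (case a of (k, k') \<Rightarrow> (m - k, k')) of (k, k') \<Rightarrow> (m - k, k')) = a"
        by (auto simp: J_def)
      show "(\<lambda>(k, k'). (m - k, k')) ` irr_index m n \<subseteq> J"
        using par1[OF True] by (auto simp: irr_index_def J_def)
      show "(\<lambda>(k, k'). (m - k, k')) ` J \<subseteq> irr_index m n"
        using par1[OF True] by (auto simp: irr_index_def J_def)
    qed
    then show ?thesis by (rule bij_betw_same_card)
  next
    case False
    have "odd n"
    proof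
      assume "even n"
      moreover have "(2::nat) dvd m" using False by simp
      ultimately have "(2::nat) dvd gcd m n" by (intro gcd_greatest) simp_all
      moreover have "gcd m n = 1" using assms(1) by (simp add: coprime_iff_gcd_eq_1)
      ultimately show False by simp
    qed
    have "bij_betw (\<lambda>(k,k'). (k, n - k')) (irr_index m n) J"
    proof (rule bij_betw_byWitness[where f'="\<lambda>(k,k'). (k, n - k')"])
      show "\<forall>a\<in>irr_index m n. (case (case a of (k, k') \<Rightarrow> (k, n - k')) of (k, k') \<Rightarrow> (k, n - k')) = a"
        by (auto simp: irr_index_def)
      show "\<forall>a\<in>J. (case (case a of (k, k') \<Rightarrow> (k, n - k')) of (k, k') \<Rightarrow> (k, n - k')) = a"
        by (auto simp: J_def)
      show "(\<lambda>(k, k'). (k, n - k')) ` irr_index m n \<subseteq> J"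
        using par2[OF \<open>odd n\<close>] by (auto simp: irr_index_def J_def)
      show "(\<lambda>(k, k'). (k, n - k')) ` J \<subseteq> irr_index m n"
        using par2[OF \<open>odd n\<close>] by (auto simp: irr_index_def J_def)
    qed
    then show ?thesis by (rule bij_betw_same_card)
  qed
  have "card (irr_index m n) + card J = card R" using card_Un_disjoint[OF fin U(2)] U(1) by simp
  then show ?thesis using cIJ cR by simp
qed


theorem theorem3p1:
  fixes m n :: nat
  assumes "0 < m" and "0 < n" and "coprime m n"
  defines "C \<equiv> Psi ` charvar m n"
      and "Red \<equiv> Psi ` Xred m n"
      and "L \<equiv> (\<lambda>(k, k'). Psi ` Xirr_line m n k k')"
  shows
    \<comment> \<open>Psi is an isomorphism onto its image: injective, and every trace function
        is a polynomial in the three coordinates on X(G_{m,n})\<close>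
    "inj_on Psi (charvar m n)
     \<and> (\<forall>w. \<exists>P. poly3_fun P \<and> (\<forall>ch\<in>charvar m n. ch w = P (Psi ch)))
     \<and> zclosed C
     \<comment> \<open>components\<close>
     \<and> zcomponents C = insert Red (L ` irr_index m n)
     \<and> card (zcomponents C) = (m - 1) * (n - 1) div 2 + 1
     \<and> (\<forall>S\<in>zcomponents C. \<exists>\<phi>. iso_to_line \<phi> S)
     \<comment> \<open>intersection pattern\<close>
     \<and> (\<forall>a\<in>irr_index m n. \<forall>b\<in>irr_index m n. a \<noteq> b \<longrightarrow> L a \<inter> L b = {})
     \<and> (\<forall>a\<in>irr_index m n. card (L a \<inter> Red) = 2)
     \<and> card (\<Union>a\<in>irr_index m n. L a \<inter> Red) = (m - 1) * (n - 1)
     \<and> (\<forall>a\<in>irr_index m n. \<forall>p\<in>L a \<inter> Red. transversal_at (L a) Red p)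
     \<comment> \<open>the singular (multiple) points of C are exactly these intersection points\<close>
     \<and> {p\<in>C. \<exists>S1\<in>zcomponents C. \<exists>S2\<in>zcomponents C. S1 \<noteq> S2 \<and> p \<in> S1 \<and> p \<in> S2}
        = (\<Union>a\<in>irr_index m n. L a \<inter> Red)"
proof -
  let ?I = "irr_index m n"
  have mn: "coprime m n" "0 < m" "0 < n" using assms by auto
  have Red: "Red = RedS m n" unfolding Red_def by (rule Red_eq)
  have Lk: "L kk = LineK m n kk" if "kk \<in> ?I" for kk
  proof -
    obtain k k' where kk: "kk = (k,k')" by (cases kk) auto
    have kI: "(k,k') \<in> ?I" using that kk by simp
    have "L (k,k') = Psi ` Xirr_line m n k k'" unfolding L_def by simp
    then show ?thesis unfolding kk using Xirr_eq[OF kI] by simp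
  qed
  have LI: "L ` ?I = LineK m n ` ?I" by (rule image_cong[OF refl]) (rule Lk)
  define FF where "FF = insert (RedS m n) (LineK m n ` ?I)"
  have finI: "finite ?I" by (rule finite_subset[of _ "{0<..<m} \<times> {0<..<n}"]) (auto simp: irr_index_def)
  have finFF: "finite FF" unfolding FF_def using finI by simp
  have Ceq: "C = \<Union>FF" unfolding C_def FF_def C_eq[OF mn] by simp
  have isoL: "iso_to_line (phiL (cc (fst kk) m) (cc (snd kk) n)) (LineK m n kk)" for kk
    unfolding LineK_cc by (rule iso_phiL)
  have isoR: "iso_to_line (phiR m n) (RedS m n)" by (rule iso_phiR[OF mn])
  have irr: "\<forall>F\<in>FF. zirred F" unfolding FF_def using iso_zirred[OF isoR] iso_zirred[OF isoL] by blast
  have Linf: "infinite (LineK m n kk)" for kk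
  proof
    assume "finite (LineK m n kk)"
    moreover have "LineK m n kk = (\<lambda>z. (cc (fst kk) m, cc (snd kk) n, z)) ` UNIV"
      unfolding LineK_cc LineS_def by auto
    moreover have "inj (\<lambda>z::complex. (cc (fst kk) m, cc (snd kk) n, z))" by (rule injI) simp
    ultimately have "finite (UNIV::complex set)" using finite_imageD by metis
    then show False using infinite_UNIV_char_0 by blast
  qed
  have interfin: "finite (LineK m n kk \<inter> RedS m n)" if "kk \<in> ?I" for kk
  proof -
    obtain k k' where kk: "kk = (k,k')" by (cases kk) auto
    show ?thesis unfolding kk inter_LR(1)[OF mn that[unfolded kk]] by simp
  qed
  have LnR: "\<not> LineK m n kk \<subseteq> RedS m n" if "kk \<in> ?I" for kk
  proof
    assume "LineK m n kk \<subseteq> RedS m n"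
    then have "LineK m n kk = LineK m n kk \<inter> RedS m n" by blast
    then show False using interfin[OF that] Linf[of kk] by simp
  qed
  have Lne: "LineK m n kk \<noteq> {}" for kk using Linf[of kk] by auto
  have LL: "a = b" if "a \<in> ?I" "b \<in> ?I" "LineK m n a \<subseteq> LineK m n b" for a b
  proof (rule ccontr)
    assume "a \<noteq> b"
    then have "LineK m n a \<inter> LineK m n b = {}" using LineK_disj mn that by blast
    then show False using that(3) Lne[of a] by blast
  qed
  have incomp: "\<forall>F\<in>FF. \<forall>F'\<in>FF. F \<subseteq> F' \<longrightarrow> F = F'"
    unfolding FF_def using Red_not_Line[OF mn(2)] LnR LL by blast
  have comps: "zcomponents C = FF" unfolding Ceq by (rule zcomponents_Union[OF finFF irr incomp])
  have RnotL: "RedS m n \<notin> LineK m n ` ?I" using Red_not_Line[OF mn(2)] by blast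
  have injL: "inj_on (LineK m n) ?I" using LL by (intro inj_onI) blast
  have cardI: "card ?I = (m - 1) * (n - 1) div 2" using card_irr[OF mn] by simp
  have inter2: "card (L a \<inter> Red) = 2" if "a \<in> ?I" for a
  proof -
    obtain k k' where kk: "a = (k,k')" by (cases a) auto
    have "L a \<inter> Red = LineK m n (k,k') \<inter> RedS m n" using Lk[OF that] Red kk by simp
    then show ?thesis unfolding inter_LR(1)[OF mn that[unfolded kk]]
      using inter_LR(2)[OF mn that[unfolded kk]] by simp
  qed
  have c1: "inj_on Psi (charvar m n)"
  proof (rule inj_onI)
    fix ch1 ch2 assume h: "ch1 \<in> charvar m n" "ch2 \<in> charvar m n" "Psi ch1 = Psi ch2"
    obtain A1 B1 where 1: "(A1,B1) \<in> reps m n" "ch1 = chi A1 B1" using h(1) unfolding charvar_def by auto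
    obtain A2 B2 where 2: "(A2,B2) \<in> reps m n" "ch2 = chi A2 B2" using h(2) unfolding charvar_def by auto
    have t: "tr3 A1 B1 = tr3 A2 B2" using h(3) 1 2 Psi_chi by simp
    show "ch1 = ch2"
    proof
      fix w
      obtain P where P: "\<forall>A B. det A = 1 \<longrightarrow> det B = 1 \<longrightarrow> chi A B w = P (tr3 A B)" using trace_poly[of w] by blast
      show "ch1 w = ch2 w" using P 1 2 t unfolding reps_def by auto
    qed
  qed
  have c2: "\<forall>w. \<exists>P. poly3_fun P \<and> (\<forall>ch\<in>charvar m n. ch w = P (Psi ch))"
  proof
    fix w
    obtain P where P: "poly3_fun P" "\<forall>A B. det A = 1 \<longrightarrow> det B = 1 \<longrightarrow> chi A B w = P (tr3 A B)" using trace_poly[of w] by blast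
    have "\<forall>ch\<in>charvar m n. ch w = P (Psi ch)" unfolding charvar_def reps_def using P(2) Psi_chi by auto
    then show "\<exists>P. poly3_fun P \<and> (\<forall>ch\<in>charvar m n. ch w = P (Psi ch))" using P(1) by blast
  qed
  have c3: "zclosed C" unfolding Ceq using irr finFF zclosed_Union unfolding zirred_def by blast
  have c4: "zcomponents C = insert Red (L ` ?I)" unfolding comps FF_def Red LI ..
  have c5: "card (zcomponents C) = (m - 1) * (n - 1) div 2 + 1"
    unfolding comps FF_def using RnotL finI card_image[OF injL] cardI by simp
  have c6: "\<forall>S\<in>zcomponents C. \<exists>\<phi>. iso_to_line \<phi> S" unfolding comps FF_def using isoR isoL by blast
  have c7: "\<forall>a\<in>?I. \<forall>b\<in>?I. a \<noteq> b \<longrightarrow> L a \<inter> L b = {}" using Lk LineK_disj[OF mn(2,3)] by simp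
  have c8: "\<forall>a\<in>?I. card (L a \<inter> Red) = 2" using inter2 by blast
  have c9: "card (\<Union>a\<in>?I. L a \<inter> Red) = (m - 1) * (n - 1)"
  proof -
    have "card (\<Union>a\<in>?I. L a \<inter> Red) = (\<Sum>a\<in>?I. card (L a \<inter> Red))"
    proof (rule card_UN_disjoint[OF finI])
      show "\<forall>a\<in>?I. finite (L a \<inter> Red)" using Lk interfin Red by simp
      show "\<forall>a\<in>?I. \<forall>b\<in>?I. a \<noteq> b \<longrightarrow> (L a \<inter> Red) \<inter> (L b \<inter> Red) = {}" using c7 by blast
    qed
    also have "\<dots> = 2 * card ?I" using inter2 by simp
    finally show ?thesis using card_irr[OF mn] by simp
  qed
  have c10: "\<forall>a\<in>?I. \<forall>p\<in>L a \<inter> Red. transversal_at (L a) Red p"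
  proof (intro ballI)
    fix a p assume a: "a \<in> ?I" and p: "p \<in> L a \<inter> Red"
    obtain k k' where kk: "a = (k,k')" by (cases a) auto
    have "L a = LineK m n (k,k')" using Lk[OF a] kk by simp
    then show "transversal_at (L a) Red p"
      using transversal_LR[OF mn a[unfolded kk]] p unfolding Red by simp
  qed
  have memS: "S = Red \<or> (\<exists>a\<in>?I. S = L a)" if "S \<in> zcomponents C" for S
    using that unfolding c4 by auto
  have c11: "{p\<in>C. \<exists>S1\<in>zcomponents C. \<exists>S2\<in>zcomponents C. S1 \<noteq> S2 \<and> p \<in> S1 \<and> p \<in> S2}
        = (\<Union>a\<in>?I. L a \<inter> Red)"
  proof (rule set_eqI, rule iffI)
    fix p assume "p \<in> {p\<in>C. \<exists>S1\<in>zcomponents C. \<exists>S2\<in>zcomponents C. S1 \<noteq> S2 \<and> p \<in> S1 \<and> p \<in> S2}"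
    then obtain S1 S2 where S: "S1 \<in> zcomponents C" "S2 \<in> zcomponents C" "S1 \<noteq> S2" "p \<in> S1" "p \<in> S2"
      by blast
    show "p \<in> (\<Union>a\<in>?I. L a \<inter> Red)"
    proof (cases "S1 = Red")
      case True
      then have "S2 \<noteq> Red" using S(3) by simp
      then obtain b where b: "b \<in> ?I" "S2 = L b" using memS[OF S(2)] by blast
      have "p \<in> L b \<inter> Red" using S(4,5) True b(2) by simp
      then show ?thesis using b(1) by (rule UN_I[rotated])
    next
      case False
      then obtain a where a: "a \<in> ?I" "S1 = L a" using memS[OF S(1)] by blast
      show ?thesis
      proof (cases "S2 = Red")
        case True
        have "p \<in> L a \<inter> Red" using S(4,5) True a(2) by simp
        then show ?thesis using a(1) by (rule UN_I[rotated])
      next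
        case False
        then obtain b where b: "b \<in> ?I" "S2 = L b" using memS[OF S(2)] by blast
        have "a \<noteq> b" using a(2) b(2) S(3) by auto
        then have "L a \<inter> L b = {}" using c7 a(1) b(1) by blast
        moreover have "p \<in> L a" "p \<in> L b" using S(4,5) a(2) b(2) by simp_all
        ultimately show ?thesis by blast
      qed
    qed
  next
    fix p assume "p \<in> (\<Union>a\<in>?I. L a \<inter> Red)"
    then obtain a where a: "a \<in> ?I" "p \<in> L a" "p \<in> Red" by blast
    have "L a \<noteq> Red" using Red_not_Line[OF mn(2) a(1)] Lk[OF a(1)] Red by auto
    moreover have "p \<in> C" using a(3) unfolding Ceq Red FF_def by blast
    moreover have "L a \<in> zcomponents C" "Red \<in> zcomponents C" using a(1) unfolding c4 by auto
    ultimately show "p \<in> {p\<in>C. \<exists>S1\<in>zcomponents C. \<exists>S2\<in>zcomponents C. S1 \<noteq> S2 \<and> p \<in> S1 \<and> p \<in> S2}"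
      using a(2,3) by blast
  qed
  show ?thesis using c1 c2 c3 c4 c5 c6 c7 c8 c9 c10 c11 by (intro conjI) assumption+
qed


end
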